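(* Let $M$ be a pseudofinite $\mathcal{L}$-structure (an infinite ultraproduct of finite $\mathcal{L}$-structures) and $X\subseteq M^n$ an internal set. Suppose there is $r\in\mathbb{N}$ such that for every $\mathcal{L}$-formula $\varphi(x,y)$ over $\emptyset$ with $|x|=1$ and every $b\in M^{|y|}$, $\pmb{\delta}_X(\varphi(x,b))\in\{0,1,\dots,r\}$, and for each $i\le r$ the set $\{b\in M^{|y|}:\pmb{\delta}_X(\varphi(x,b))=i\}$ is $\emptyset$-definable. Then for every formula $\psi(x,y)$ and every $c\in M^{|y|}$, $\pmb{\delta}_X(\psi(x,c))\in\{0,\dots,|x|\cdot r\}$. Moreover, $\pmb{\delta}_X$ is definable.
   Context: For internal $D=\prod D_i/\mathcal{U}$, $|D|=(|D_i|)/\mathcal{U}\in\mathbb{R}^*$; for definable $A$, $\pmb{\delta}_X(A)=\mathrm{st}(\log|A|/\log|X|)$. $\pmb{\delta}_X$ is continuous if for every parameter-free formula $\phi(x,y)$ and reals $r_1<r_2$ there is a $\emptyset$-definable $D$ with $\{a:\pmb{\delta}_X(\phi(x,a))\le r_1\}\subseteq D\subseteq\{a:\pmb{\delta}_X(\phi(x,a))<r_2\}$; it is definable if it is continuous and for every parameter-free $\phi(x,y)$ the set $\{\pmb{\delta}_X(\phi(x,a)):a\in M^{|y|}\}$ is finite. *)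

theory Defs
  imports Complex_Main "HOL-Library.Extended_Real"
begin

text \<open>A language is given by the arities of its function symbols ('f) and relation
  symbols ('r). Variables are natural numbers.\<close>

datatype 'f trm = Var nat | Fn 'f "'f trm list"

datatype ('f, 'r) form =
    FF
  | Eq "'f trm" "'f trm"
  | Rel 'r "'f trm list"
  | Neg "('f, 'r) form"
  | Conj "('f, 'r) form" "('f, 'r) form"
  | Ex nat "('f, 'r) form"

record ('f, 'r, 'a) struc =
  sdom :: "'a set"
  sfun :: "'f \<Rightarrow> 'a list \<Rightarrow> 'a"
  srel :: "'r \<Rightarrow> 'a list \<Rightarrow> bool"

fun wft :: "('f \<Rightarrow> nat) \<Rightarrow> 'f trm \<Rightarrow> bool" where
  "wft fa (Var v) = True"
| "wft fa (Fn f ts) = (length ts = fa f \<and> (\<forall>t\<in>set ts. wft fa t))"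

fun wff :: "('f \<Rightarrow> nat) \<Rightarrow> ('r \<Rightarrow> nat) \<Rightarrow> ('f, 'r) form \<Rightarrow> bool" where
  "wff fa ra FF = True"
| "wff fa ra (Eq s t) = (wft fa s \<and> wft fa t)"
| "wff fa ra (Rel r ts) = (length ts = ra r \<and> (\<forall>t\<in>set ts. wft fa t))"
| "wff fa ra (Neg p) = wff fa ra p"
| "wff fa ra (Conj p q) = (wff fa ra p \<and> wff fa ra q)"
| "wff fa ra (Ex v p) = wff fa ra p"

fun fvt :: "'f trm \<Rightarrow> nat set" where
  "fvt (Var v) = {v}"
| "fvt (Fn f ts) = (\<Union>t\<in>set ts. fvt t)"

fun fvf :: "('f, 'r) form \<Rightarrow> nat set" where
  "fvf FF = {}"
| "fvf (Eq s t) = fvt s \<union> fvt t"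
| "fvf (Rel r ts) = (\<Union>t\<in>set ts. fvt t)"
| "fvf (Neg p) = fvf p"
| "fvf (Conj p q) = fvf p \<union> fvf q"
| "fvf (Ex v p) = fvf p - {v}"

fun evalt :: "('f, 'r, 'a) struc \<Rightarrow> (nat \<Rightarrow> 'a) \<Rightarrow> 'f trm \<Rightarrow> 'a" where
  "evalt S e (Var v) = e v"
| "evalt S e (Fn f ts) = sfun S f (map (evalt S e) ts)"

fun sat :: "('f, 'r, 'a) struc \<Rightarrow> (nat \<Rightarrow> 'a) \<Rightarrow> ('f, 'r) form \<Rightarrow> bool" where
  "sat S e FF = False"
| "sat S e (Eq s t) = (evalt S e s = evalt S e t)"
| "sat S e (Rel r ts) = srel S r (map (evalt S e) ts)"
| "sat S e (Neg p) = (\<not> sat S e p)"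
| "sat S e (Conj p q) = (sat S e p \<and> sat S e q)"
| "sat S e (Ex v p) = (\<exists>a\<in>sdom S. sat S (e(v := a)) p)"

definition is_struc :: "('f \<Rightarrow> nat) \<Rightarrow> ('f, 'r, 'a) struc \<Rightarrow> bool" where
  "is_struc fa S \<longleftrightarrow> sdom S \<noteq> {} \<and>
     (\<forall>f as. length as = fa f \<and> set as \<subseteq> sdom S \<longrightarrow> sfun S f as \<in> sdom S)"

definition tuples :: "'a set \<Rightarrow> nat \<Rightarrow> 'a list set" where
  "tuples D k = {xs. length xs = k \<and> set xs \<subseteq> D}"

definition lenv :: "'a list \<Rightarrow> nat \<Rightarrow> 'a" where
  "lenv xs v = (if v < length xs then xs ! v else undefined)"

text \<open>phi(x,b) for |x| = k: x are the variables 0..k-1, y the variables k..k+|b|-1.\<close>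
definition inst :: "('f, 'r, 'a) struc \<Rightarrow> nat \<Rightarrow> ('f, 'r) form \<Rightarrow> 'a list \<Rightarrow> 'a list set" where
  "inst M k phi b = {a \<in> tuples (sdom M) k. sat M (lenv (a @ b)) phi}"

text \<open>Parameter-free formula phi(x,y) with |x| = k, |y| = m.\<close>
definition pformula :: "('f \<Rightarrow> nat) \<Rightarrow> ('r \<Rightarrow> nat) \<Rightarrow> nat \<Rightarrow> nat \<Rightarrow> ('f, 'r) form \<Rightarrow> bool" where
  "pformula fa ra k m phi \<longleftrightarrow> wff fa ra phi \<and> fvf phi \<subseteq> {..<k + m}"

definition definable0 :: "('f \<Rightarrow> nat) \<Rightarrow> ('r \<Rightarrow> nat) \<Rightarrow> ('f, 'r, 'a) struc \<Rightarrow> nat \<Rightarrow> 'a list set \<Rightarrow> bool" where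
  "definable0 fa ra M m D \<longleftrightarrow>
     (\<exists>theta. pformula fa ra m 0 theta \<and> D = {b \<in> tuples (sdom M) m. sat M (lenv b) theta})"

definition ultrafilter :: "'i set set \<Rightarrow> bool" where
  "ultrafilter U \<longleftrightarrow> UNIV \<in> U \<and> {} \<notin> U \<and>
     (\<forall>A B. A \<in> U \<and> A \<subseteq> B \<longrightarrow> B \<in> U) \<and>
     (\<forall>A B. A \<in> U \<and> B \<in> U \<longrightarrow> A \<inter> B \<in> U) \<and>
     (\<forall>A. A \<in> U \<or> - A \<in> U)"

definition seqs :: "('i \<Rightarrow> ('f, 'r, 'a) struc) \<Rightarrow> ('i \<Rightarrow> 'a) set" where
  "seqs S = {a. \<forall>i. a i \<in> sdom (S i)}"

definition ucls :: "('i \<Rightarrow> ('f, 'r, 'a) struc) \<Rightarrow> 'i set set \<Rightarrow> ('i \<Rightarrow> 'a) \<Rightarrow> ('i \<Rightarrow> 'a) set" where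
  "ucls S U a = {b \<in> seqs S. {i. a i = b i} \<in> U}"

definition urep :: "('i \<Rightarrow> 'a) set \<Rightarrow> 'i \<Rightarrow> 'a" where
  "urep c = (SOME a. a \<in> c)"

definition uprod :: "('i \<Rightarrow> ('f, 'r, 'a) struc) \<Rightarrow> 'i set set \<Rightarrow> ('f, 'r, ('i \<Rightarrow> 'a) set) struc" where
  "uprod S U = \<lparr> sdom = ucls S U ` seqs S,
                 sfun = (\<lambda>f cs. ucls S U (\<lambda>i. sfun (S i) f (map (\<lambda>c. urep c i) cs))),
                 srel = (\<lambda>r cs. {i. srel (S i) r (map (\<lambda>c. urep c i) cs)} \<in> U) \<rparr>"

text \<open>The internal subset \<Pi> A_i / U of M^k determined by a family A_i of subsets of S_i^k.\<close>
definition uset :: "('i \<Rightarrow> ('f, 'r, 'a) struc) \<Rightarrow> 'i set set \<Rightarrow> nat \<Rightarrow> ('i \<Rightarrow> 'a list set)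
    \<Rightarrow> ('i \<Rightarrow> 'a) set list set" where
  "uset S U k A = {cs \<in> tuples (sdom (uprod S U)) k. {i. map (\<lambda>c. urep c i) cs \<in> A i} \<in> U}"

definition internal :: "('i \<Rightarrow> ('f, 'r, 'a) struc) \<Rightarrow> 'i set set \<Rightarrow> nat \<Rightarrow> ('i \<Rightarrow> 'a) set list set \<Rightarrow> bool" where
  "internal S U k D \<longleftrightarrow> (\<exists>A. (\<forall>i. A i \<subseteq> tuples (sdom (S i)) k) \<and> D = uset S U k A)"

text \<open>A chosen family representing an internal set (well defined up to U).\<close>
definition urepr :: "('i \<Rightarrow> ('f, 'r, 'a) struc) \<Rightarrow> 'i set set \<Rightarrow> nat \<Rightarrow> ('i \<Rightarrow> 'a) set list set
    \<Rightarrow> 'i \<Rightarrow> 'a list set" where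
  "urepr S U k D = (SOME A. (\<forall>i. A i \<subseteq> tuples (sdom (S i)) k) \<and> D = uset S U k A)"

text \<open>Standard part of the class of a real sequence, i.e. its U-limit, taken in the
  extended reals (infinite classes get \<plusminus>\<infinity>).\<close>
definition ulim :: "'i set set \<Rightarrow> ('i \<Rightarrow> real) \<Rightarrow> ereal" where
  "ulim U f = (THE L. \<forall>T. open T \<and> L \<in> T \<longrightarrow> {i. ereal (f i) \<in> T} \<in> U)"

definition lg :: "nat \<Rightarrow> real" where
  "lg n = (if n = 0 then 0 else ln (real n))"

text \<open>delta_X(A) = st(log|A| / log|X|), for internal X \<subseteq> M^n and internal A \<subseteq> M^k.\<close>
definition udelta :: "('i \<Rightarrow> ('f, 'r, 'a) struc) \<Rightarrow> 'i set set \<Rightarrow> nat \<Rightarrow> ('i \<Rightarrow> 'a) set list set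
    \<Rightarrow> nat \<Rightarrow> ('i \<Rightarrow> 'a) set list set \<Rightarrow> ereal" where
  "udelta S U n X k A =
     ulim U (\<lambda>i. lg (card (urepr S U k A i)) / lg (card (urepr S U n X i)))"

definition delta_continuous :: "('f \<Rightarrow> nat) \<Rightarrow> ('r \<Rightarrow> nat) \<Rightarrow> ('i \<Rightarrow> ('f, 'r, 'a) struc)
    \<Rightarrow> 'i set set \<Rightarrow> nat \<Rightarrow> ('i \<Rightarrow> 'a) set list set \<Rightarrow> bool" where
  "delta_continuous fa ra S U n X \<longleftrightarrow>
     (\<forall>phi k m. pformula fa ra k m phi \<longrightarrow>
       (\<forall>r1 r2 :: real. r1 < r2 \<longrightarrow>
         (\<exists>D. definable0 fa ra (uprod S U) m D \<and>
              {a \<in> tuples (sdom (uprod S U)) m.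
                  udelta S U n X k (inst (uprod S U) k phi a) \<le> ereal r1} \<subseteq> D \<and>
              D \<subseteq> {a \<in> tuples (sdom (uprod S U)) m.
                  udelta S U n X k (inst (uprod S U) k phi a) < ereal r2})))"

definition delta_definable :: "('f \<Rightarrow> nat) \<Rightarrow> ('r \<Rightarrow> nat) \<Rightarrow> ('i \<Rightarrow> ('f, 'r, 'a) struc)
    \<Rightarrow> 'i set set \<Rightarrow> nat \<Rightarrow> ('i \<Rightarrow> 'a) set list set \<Rightarrow> bool" where
  "delta_definable fa ra S U n X \<longleftrightarrow> delta_continuous fa ra S U n X \<and>
     (\<forall>phi k m. pformula fa ra k m phi \<longrightarrow>
        finite ((\<lambda>a. udelta S U n X k (inst (uprod S U) k phi a)) ` tuples (sdom (uprod S U)) m))"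

end

theory Submission
  imports Defs
begin


locale UF = fixes U :: "'i set set" assumes ultra: "ultrafilter U"
begin
lemma uf_UNIV: "UNIV \<in> U" using ultra by (simp add: ultrafilter_def)
lemma uf_empty: "{} \<notin> U" using ultra by (simp add: ultrafilter_def)
lemma uf_mono: "A \<in> U \<Longrightarrow> A \<subseteq> B \<Longrightarrow> B \<in> U"
  using ultra unfolding ultrafilter_def by blast
lemma uf_Int: "A \<in> U \<Longrightarrow> B \<in> U \<Longrightarrow> A \<inter> B \<in> U"
  using ultra unfolding ultrafilter_def by blast
lemma uf_compl: "A \<in> U \<or> - A \<in> U"
  using ultra unfolding ultrafilter_def by blast
lemma uf_not: "(- A \<in> U) \<longleftrightarrow> A \<notin> U"
  by (metis Compl_disjoint uf_Int uf_compl uf_empty)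
lemma uf_ex: "A \<in> U \<Longrightarrow> \<exists>i. i \<in> A"
  using uf_empty by (metis all_not_in_conv)
lemma uf_conj: "{i. P i} \<in> U \<Longrightarrow> {i. Q i} \<in> U \<Longrightarrow> {i. P i \<and> Q i} \<in> U"
  using uf_Int[of "{i. P i}" "{i. Q i}"] by (simp add: Collect_conj_eq)
lemma uf_imp: "{i. P i} \<in> U \<Longrightarrow> (\<And>i. P i \<Longrightarrow> Q i) \<Longrightarrow> {i. Q i} \<in> U"
  using uf_mono[of "{i. P i}" "{i. Q i}"] by blast
lemma uf_ex2: "{i. P i} \<in> U \<Longrightarrow> \<exists>i. P i"
  using uf_ex by blast
lemma uf_iff: "W \<in> U \<Longrightarrow> (\<And>i. i \<in> W \<Longrightarrow> (i \<in> A \<longleftrightarrow> i \<in> B)) \<Longrightarrow> A \<in> U \<longleftrightarrow> B \<in> U"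
proof -
  assume w: "W \<in> U" and h: "\<And>i. i \<in> W \<Longrightarrow> (i \<in> A \<longleftrightarrow> i \<in> B)"
  have "A \<in> U \<Longrightarrow> B \<in> U" using uf_Int[OF _ w, of A] uf_mono[of "A \<inter> W" B] h by blast
  moreover have "B \<in> U \<Longrightarrow> A \<in> U" using uf_Int[OF _ w, of B] uf_mono[of "B \<inter> W" A] h by blast
  ultimately show ?thesis by blast
qed
lemma uf_iff2: "{i. W i} \<in> U \<Longrightarrow> (\<And>i. W i \<Longrightarrow> (P i \<longleftrightarrow> Q i)) \<Longrightarrow> {i. P i} \<in> U \<longleftrightarrow> {i. Q i} \<in> U"
  using uf_iff[of "{i. W i}"] by auto
lemma uf_Un: "A \<union> B \<in> U \<Longrightarrow> A \<in> U \<or> B \<in> U"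
proof (rule ccontr)
  assume ab: "A \<union> B \<in> U" and n: "\<not> (A \<in> U \<or> B \<in> U)"
  then have "- A \<in> U" "- B \<in> U" using uf_not by auto
  then have "(A \<union> B) \<inter> (- A \<inter> - B) \<in> U" using uf_Int ab by blast
  moreover have "(A \<union> B) \<inter> (- A \<inter> - B) = {}" by blast
  ultimately show False using uf_empty by simp
qed
lemma uf_finite_Inter: "finite I \<Longrightarrow> (\<And>x. x \<in> I \<Longrightarrow> {i. P x i} \<in> U) \<Longrightarrow> {i. \<forall>x\<in>I. P x i} \<in> U"
proof (induction I rule: finite_induct)
  case empty then show ?case using uf_UNIV by simp
next
  case (insert a I)
  then have "{i. P a i \<and> (\<forall>x\<in>I. P x i)} \<in> U" using uf_conj by simp
  then show ?case by simp
qed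
lemma uf_finite_Ex: "finite I \<Longrightarrow> {i. \<exists>x\<in>I. P x i} \<in> U \<Longrightarrow> \<exists>x\<in>I. {i. P x i} \<in> U"
proof (induction I rule: finite_induct)
  case empty then show ?case using uf_empty by simp
next
  case (insert a I)
  have "{i. P a i} \<union> {i. \<exists>x\<in>I. P x i} \<in> U" using insert(4) by (simp add: Collect_disj_eq[symmetric])
  then show ?case using uf_Un insert by blast
qed
lemma uf_neg: "{i. \<not> P i} \<in> U \<longleftrightarrow> {i. P i} \<notin> U"
  using uf_not[of "{i. P i}"] by (simp add: Collect_neg_eq)
end



definition rl :: "('i \<Rightarrow> 'a) set list \<Rightarrow> 'i \<Rightarrow> 'a list" where
  "rl cs i = map (\<lambda>c. urep c i) cs"

locale UP = UF U for U :: "'i set set" +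
  fixes fa :: "'f \<Rightarrow> nat" and ra :: "'r \<Rightarrow> nat" and S :: "'i \<Rightarrow> ('f, 'r, 'a) struc"
  assumes strucs: "\<And>i. is_struc fa (S i)" and fin: "\<And>i. finite (sdom (S i))"
begin

abbreviation "M \<equiv> uprod S U"

lemma dom_ne: "sdom (S i) \<noteq> {}" using strucs[of i] by (simp add: is_struc_def)

lemma fun_closed: "length as = fa f \<Longrightarrow> set as \<subseteq> sdom (S i) \<Longrightarrow> sfun (S i) f as \<in> sdom (S i)"
  using strucs[of i] by (simp add: is_struc_def)

definition s0 :: "'i \<Rightarrow> 'a" where "s0 = (\<lambda>i. SOME x. x \<in> sdom (S i))"

lemma s0_seqs: "s0 \<in> seqs S"
  unfolding s0_def seqs_def using dom_ne by (simp add: some_in_eq)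

lemma ucls_refl: "a \<in> seqs S \<Longrightarrow> a \<in> ucls S U a"
  unfolding ucls_def using uf_UNIV by simp

lemma ucls_eq: "a \<in> seqs S \<Longrightarrow> b \<in> seqs S \<Longrightarrow> ucls S U a = ucls S U b \<longleftrightarrow> {i. a i = b i} \<in> U"
proof
  assume a: "a \<in> seqs S" and b: "b \<in> seqs S" and e: "ucls S U a = ucls S U b"
  then have "b \<in> ucls S U a" using ucls_refl by simp
  then show "{i. a i = b i} \<in> U" by (simp add: ucls_def)
next
  assume a: "a \<in> seqs S" and b: "b \<in> seqs S" and e: "{i. a i = b i} \<in> U"
  show "ucls S U a = ucls S U b"
    unfolding ucls_def using uf_iff2[OF e, of "\<lambda>i. a i = _ i" "\<lambda>i. b i = _ i"] by auto
qed

lemma dom_M: "sdom M = ucls S U ` seqs S" by (simp add: uprod_def)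

lemma ucls_in: "a \<in> seqs S \<Longrightarrow> ucls S U a \<in> sdom M" by (simp add: dom_M)

lemma urep_in: assumes "c \<in> sdom M"
  shows "urep c \<in> seqs S" "c = ucls S U (urep c)"
proof -
  obtain a where a: "a \<in> seqs S" "c = ucls S U a" using assms dom_M by auto
  then have "a \<in> c" using ucls_refl by simp
  then have u: "urep c \<in> c" unfolding urep_def by (metis someI)
  then show "urep c \<in> seqs S" using a by (simp add: ucls_def)
  have "{i. a i = urep c i} \<in> U" using u a by (simp add: ucls_def)
  then show "c = ucls S U (urep c)" using a ucls_eq \<open>urep c \<in> seqs S\<close> by simp
qed

lemma urep_ucls: "a \<in> seqs S \<Longrightarrow> {i. urep (ucls S U a) i = a i} \<in> U"
  using urep_in[OF ucls_in] ucls_eq by (metis (mono_tags, lifting) Collect_cong)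

lemma seqs_D: "a \<in> seqs S \<Longrightarrow> a i \<in> sdom (S i)" by (simp add: seqs_def)

lemma urep_dom: "c \<in> sdom M \<Longrightarrow> urep c i \<in> sdom (S i)"
  using urep_in(1) seqs_D by blast

lemma evalt_los:
  "wft fa t \<Longrightarrow> (\<forall>v. E v \<in> seqs S) \<Longrightarrow>
    (\<lambda>i. evalt (S i) (\<lambda>v. E v i) t) \<in> seqs S \<and>
    evalt M (\<lambda>v. ucls S U (E v)) t = ucls S U (\<lambda>i. evalt (S i) (\<lambda>v. E v i) t)"
proof (induction t)
  case (Var x)
  then show ?case by simp
next
  case (Fn f ts)
  define g where "g t = (\<lambda>i. evalt (S i) (\<lambda>v. E v i) t)" for t
  have IH: "\<And>t. t \<in> set ts \<Longrightarrow> g t \<in> seqs S \<and> evalt M (\<lambda>v. ucls S U (E v)) t = ucls S U (g t)"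
    using Fn unfolding g_def by simp
  have len: "length ts = fa f" using Fn by simp
  have gd: "\<And>t i. t \<in> set ts \<Longrightarrow> g t i \<in> sdom (S i)" using IH seqs_D by blast
  have s1: "(\<lambda>i. evalt (S i) (\<lambda>v. E v i) (Fn f ts)) \<in> seqs S"
    unfolding seqs_def using gd len by (auto intro!: fun_closed simp: g_def)
  have mp: "map (evalt M (\<lambda>v. ucls S U (E v))) ts = map (\<lambda>t. ucls S U (g t)) ts"
    using IH by simp
  have "evalt M (\<lambda>v. ucls S U (E v)) (Fn f ts) = sfun M f (map (evalt M (\<lambda>v. ucls S U (E v))) ts)"
    by simp
  also have "\<dots> =
      ucls S U (\<lambda>i. sfun (S i) f (map (\<lambda>c. urep c i) (map (\<lambda>t. ucls S U (g t)) ts)))"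
    unfolding mp by (simp add: uprod_def)
  also have "\<dots> = ucls S U (\<lambda>i. sfun (S i) f (map (\<lambda>t. g t i) ts))"
  proof (subst ucls_eq)
    show "(\<lambda>i. sfun (S i) f (map (\<lambda>c. urep c i) (map (\<lambda>t. ucls S U (g t)) ts))) \<in> seqs S"
      unfolding seqs_def using IH len
      by (auto intro!: fun_closed simp: seqs_D urep_in(1)[OF ucls_in])
    show "(\<lambda>i. sfun (S i) f (map (\<lambda>t. g t i) ts)) \<in> seqs S"
      using s1 by (simp add: g_def)
    have "{i. \<forall>t\<in>set ts. urep (ucls S U (g t)) i = g t i} \<in> U"
      using uf_finite_Inter[of "set ts"] urep_ucls IH by simp
    then show "{i. sfun (S i) f (map (\<lambda>c. urep c i) (map (\<lambda>t. ucls S U (g t)) ts)) =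
        sfun (S i) f (map (\<lambda>t. g t i) ts)} \<in> U"
      by (rule uf_imp) (simp cong: map_cong)
  qed
  finally show ?case using s1 by (simp add: g_def)
qed

lemma sat_los:
  "wff fa ra p \<Longrightarrow> (\<forall>v. E v \<in> seqs S) \<Longrightarrow>
    sat M (\<lambda>v. ucls S U (E v)) p \<longleftrightarrow> {i. sat (S i) (\<lambda>v. E v i) p} \<in> U"
proof (induction p arbitrary: E)
  case FF
  then show ?case using uf_empty by simp
next
  case (Eq s t)
  then show ?case using evalt_los[of s E] evalt_los[of t E] ucls_eq by simp
next
  case (Rel r ts)
  define g where "g t = (\<lambda>i. evalt (S i) (\<lambda>v. E v i) t)" for t
  have IH: "\<And>t. t \<in> set ts \<Longrightarrow> g t \<in> seqs S \<and> evalt M (\<lambda>v. ucls S U (E v)) t = ucls S U (g t)"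
    using Rel evalt_los unfolding g_def by simp
  have W: "{i. \<forall>t\<in>set ts. urep (ucls S U (g t)) i = g t i} \<in> U"
    using uf_finite_Inter[of "set ts"] urep_ucls IH by simp
  have mp: "map (evalt M (\<lambda>v. ucls S U (E v))) ts = map (\<lambda>t. ucls S U (g t)) ts"
    using IH by simp
  have "sat M (\<lambda>v. ucls S U (E v)) (Rel r ts) \<longleftrightarrow> srel M r (map (evalt M (\<lambda>v. ucls S U (E v))) ts)"
    by simp
  also have "\<dots> \<longleftrightarrow>
     {i. srel (S i) r (map (\<lambda>c. urep c i) (map (\<lambda>t. ucls S U (g t)) ts))} \<in> U"
    unfolding mp by (simp add: uprod_def)
  also have "\<dots> \<longleftrightarrow> {i. srel (S i) r (map (\<lambda>t. g t i) ts)} \<in> U"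
    by (rule uf_iff2[OF W]) (simp cong: map_cong)
  finally show ?case by (simp add: g_def)
next
  case (Neg p)
  then show ?case using uf_neg by simp
next
  case (Conj p q)
  then show ?case using uf_conj uf_mono by (auto simp: Collect_conj_eq)
next
  case (Ex x p)
  have wp: "wff fa ra p" using Ex by simp
  have upd: "(\<lambda>v. ucls S U (E v))(x := ucls S U b) = (\<lambda>v. ucls S U ((E(x := b)) v))" for b
    by (rule ext) simp
  have upd2: "(\<lambda>v. (E(x := b)) v i) = (\<lambda>v. E v i)(x := b i)" for b i
    by auto
  show ?case
  proof
    assume "sat M (\<lambda>v. ucls S U (E v)) (Ex x p)"
    then obtain c where c: "c \<in> sdom M" "sat M ((\<lambda>v. ucls S U (E v))(x := c)) p" by auto
    define b where "b = urep c"
    have b: "b \<in> seqs S" "c = ucls S U b" using urep_in[OF c(1)] b_def by auto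
    have "\<forall>v. (E(x := b)) v \<in> seqs S" using Ex b by simp
    then have "{i. sat (S i) (\<lambda>v. (E(x := b)) v i) p} \<in> U"
      using Ex.IH[OF wp] c(2) b upd by metis
    then have h2: "{i. sat (S i) ((\<lambda>v. E v i)(x := b i)) p} \<in> U" by (simp only: upd2)
    show "{i. sat (S i) (\<lambda>v. E v i) (Ex x p)} \<in> U"
    proof (rule uf_imp[OF h2])
      fix i assume "sat (S i) ((\<lambda>v. E v i)(x := b i)) p"
      then show "sat (S i) (\<lambda>v. E v i) (Ex x p)" using seqs_D[OF b(1), of i] by auto
    qed
  next
    assume h: "{i. sat (S i) (\<lambda>v. E v i) (Ex x p)} \<in> U"
    define b where "b i = (if \<exists>a\<in>sdom (S i). sat (S i) ((\<lambda>v. E v i)(x := a)) p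
        then SOME a. a \<in> sdom (S i) \<and> sat (S i) ((\<lambda>v. E v i)(x := a)) p else s0 i)" for i
    have bi: "b i \<in> sdom (S i) \<and> sat (S i) ((\<lambda>v. E v i)(x := b i)) p"
      if "\<exists>a\<in>sdom (S i). sat (S i) ((\<lambda>v. E v i)(x := a)) p" for i
    proof -
      have "\<exists>a. a \<in> sdom (S i) \<and> sat (S i) ((\<lambda>v. E v i)(x := a)) p" using that by blast
      then have "(SOME a. a \<in> sdom (S i) \<and> sat (S i) ((\<lambda>v. E v i)(x := a)) p) \<in> sdom (S i) \<and>
         sat (S i) ((\<lambda>v. E v i)(x := (SOME a. a \<in> sdom (S i) \<and> sat (S i) ((\<lambda>v. E v i)(x := a)) p))) p"
        by (rule someI_ex)
      then show ?thesis using that by (simp add: b_def)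
    qed
    have "b i \<in> sdom (S i)" for i
      using bi[of i] s0_seqs seqs_D by (cases "\<exists>a\<in>sdom (S i). sat (S i) ((\<lambda>v. E v i)(x := a)) p")
        (auto simp: b_def)
    then have bs: "b \<in> seqs S" unfolding seqs_def by simp
    have "{i. sat (S i) ((\<lambda>v. E v i)(x := b i)) p} \<in> U"
    proof (rule uf_imp[OF h])
      fix i assume "sat (S i) (\<lambda>v. E v i) (Ex x p)"
      then show "sat (S i) ((\<lambda>v. E v i)(x := b i)) p" using bi[of i] by simp
    qed
    then have "{i. sat (S i) (\<lambda>v. (E(x := b)) v i) p} \<in> U" by (simp only: upd2)
    moreover have "\<forall>v. (E(x := b)) v \<in> seqs S" using Ex.prems bs by simp
    ultimately have "sat M (\<lambda>v. ucls S U ((E(x := b)) v)) p" using Ex.IH[OF wp] by blast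
    then have "sat M ((\<lambda>v. ucls S U (E v))(x := ucls S U b)) p" by (simp only: upd)
    then show "sat M (\<lambda>v. ucls S U (E v)) (Ex x p)"
      using ucls_in[OF bs] by auto
  qed
qed

end


lemma evalt_cong: "(\<forall>v\<in>fvt t. e v = e' v) \<Longrightarrow> evalt T e t = evalt T e' t"
  by (induction t) (auto cong: map_cong)

lemma sat_cong: "(\<forall>v\<in>fvf p. e v = e' v) \<Longrightarrow> sat T e p = sat T e' p"
proof (induction p arbitrary: e e')
  case (Eq s t)
  have "evalt T e s = evalt T e' s" by (rule evalt_cong) (use Eq in auto)
  moreover have "evalt T e t = evalt T e' t" by (rule evalt_cong) (use Eq in auto)
  ultimately show ?case by simp
next
  case (Rel r ts)
  have mp: "map (evalt T e) ts = map (evalt T e') ts"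
  proof (rule map_cong[OF refl])
    fix t assume "t \<in> set ts" then show "evalt T e t = evalt T e' t" using Rel.prems by (intro evalt_cong) auto
  qed
  show ?case by (simp only: sat.simps mp)
next
  case (Ex x p)
  have "\<And>a. sat T (e(x := a)) p = sat T (e'(x := a)) p" using Ex by (intro Ex.IH) auto
  then show ?case by simp
next
  case (Conj p q)
  have "sat T e p = sat T e' p" by (rule Conj.IH(1)) (use Conj.prems in auto)
  moreover have "sat T e q = sat T e' q" by (rule Conj.IH(2)) (use Conj.prems in auto)
  ultimately show ?case by simp
qed auto

fun rent :: "(nat \<Rightarrow> nat) \<Rightarrow> 'f trm \<Rightarrow> 'f trm" where
  "rent s (Var v) = Var (s v)"
| "rent s (Fn f ts) = Fn f (map (rent s) ts)"

fun renf :: "(nat \<Rightarrow> nat) \<Rightarrow> ('f, 'r) form \<Rightarrow> ('f, 'r) form" where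
  "renf s FF = FF"
| "renf s (Eq a b) = Eq (rent s a) (rent s b)"
| "renf s (Rel r ts) = Rel r (map (rent s) ts)"
| "renf s (Neg p) = Neg (renf s p)"
| "renf s (Conj p q) = Conj (renf s p) (renf s q)"
| "renf s (Ex v p) = Ex (s v) (renf s p)"

lemma evalt_ren: "evalt T e (rent s t) = evalt T (e \<circ> s) t"
  by (induction t) (auto cong: map_cong)

lemma sat_ren: "inj s \<Longrightarrow> sat T e (renf s p) = sat T (e \<circ> s) p"
proof (induction p arbitrary: e)
  case (Eq a b) then show ?case by (simp add: evalt_ren comp_def)
next
  case (Rel r ts) then show ?case by (simp add: evalt_ren comp_def cong: map_cong)
next
  case (Ex x p)
  have u: "(e(s x := a)) \<circ> s = (e \<circ> s)(x := a)" for a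
    using Ex.prems by (auto simp: fun_eq_iff inj_eq)
  have "sat T e (renf s (Ex x p)) = (\<exists>a\<in>sdom T. sat T (e(s x := a)) (renf s p))" by simp
  also have "\<dots> = (\<exists>a\<in>sdom T. sat T ((e(s x := a)) \<circ> s) p)" by (rule bex_cong[OF refl], rule Ex.IH[OF Ex.prems])
  also have "\<dots> = (\<exists>a\<in>sdom T. sat T ((e \<circ> s)(x := a)) p)" by (simp only: u)
  finally show ?case by (simp only: sat.simps)
qed auto

lemma wft_ren: "wft fa (rent s t) = wft fa t"
  by (induction t) auto

lemma wff_ren: "wff fa ra (renf s p) = wff fa ra p"
  by (induction p) (auto simp: wft_ren)

lemma fvt_ren: "fvt (rent s t) = s ` fvt t"
  by (induction t) auto

lemma fvf_ren: "inj s \<Longrightarrow> fvf (renf s p) = s ` fvf p"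
  by (induction p) (auto simp: fvt_ren inj_eq)

lemma lenv_Cons: "lenv (x # l) v = (if v = 0 then x else lenv l (v - 1))"
  by (cases v) (auto simp: lenv_def)

lemma lenv_Cons_Suc: "lenv (x # l) \<circ> Suc = lenv l"
  by (auto simp: fun_eq_iff lenv_Cons)

lemma lenv_append: "lenv (a @ b) v = (if v < length a then a ! v else lenv b (v - length a))"
  by (auto simp: lenv_def nth_append)

definition rot :: "nat \<Rightarrow> nat \<Rightarrow> nat" where
  "rot N v = (if v = 0 then N else if v \<le> N then v - 1 else v)"

lemma inj_rot: "inj (rot N)"
  unfolding inj_def rot_def by auto

definition proj :: "nat \<Rightarrow> ('f, 'r) form \<Rightarrow> ('f, 'r) form" where
  "proj N p = renf (rot N) (Ex 0 p)"

lemma sat_proj: assumes "fvf p \<subseteq> {..<N}"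
  shows "sat T (lenv l) (proj N p) \<longleftrightarrow> (\<exists>x\<in>sdom T. sat T (lenv (x # l)) p)"
proof -
  have "sat T (lenv l) (proj N p) \<longleftrightarrow> sat T (lenv l \<circ> rot N) (Ex 0 p)"
    unfolding proj_def by (rule sat_ren[OF inj_rot])
  also have "\<dots> \<longleftrightarrow> (\<exists>x\<in>sdom T. sat T ((lenv l \<circ> rot N)(0 := x)) p)" by simp
  also have "\<dots> \<longleftrightarrow> (\<exists>x\<in>sdom T. sat T (lenv (x # l)) p)"
  proof -
    have "sat T ((lenv l \<circ> rot N)(0 := x)) p = sat T (lenv (x # l)) p" for x
      by (rule sat_cong) (use assms in \<open>auto simp: rot_def lenv_Cons\<close>)
    then show ?thesis by simp
  qed
  finally show ?thesis .
qed

lemma wff_proj: "wff fa ra (proj N p) = wff fa ra p"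
  by (simp add: proj_def wff_ren)

lemma fvf_proj: assumes "fvf p \<subseteq> {..<Suc N}" shows "fvf (proj (Suc N) p) \<subseteq> {..<N}"
proof -
  have r0: "rot (Suc N) 0 = Suc N" by (simp add: rot_def)
  have "fvf (proj (Suc N) p) = rot (Suc N) ` fvf p - {Suc N}"
    unfolding proj_def by (simp only: renf.simps fvf.simps fvf_ren[OF inj_rot] r0)
  also have "\<dots> \<subseteq> {..<N}" using assms by (auto simp: rot_def)
  finally show ?thesis .
qed

fun exk :: "nat \<Rightarrow> nat \<Rightarrow> ('f, 'r) form \<Rightarrow> ('f, 'r) form" where
  "exk 0 m p = p"
| "exk (Suc k) m p = exk k m (proj (Suc k + m) p)"

lemma tuples_Suc: "tuples D (Suc k) = {x # a | x a. x \<in> D \<and> a \<in> tuples D k}"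
  by (auto simp: tuples_def length_Suc_conv)

lemma tuples_0: "tuples D 0 = {[]}"
  by (auto simp: tuples_def)

lemma exk_props: "fvf p \<subseteq> {..<k + m} \<Longrightarrow>
   fvf (exk k m p) \<subseteq> {..<m} \<and> wff fa ra (exk k m p) = wff fa ra p \<and>
   (\<forall>cs. sat T (lenv cs) (exk k m p) \<longleftrightarrow> (\<exists>a\<in>tuples (sdom T) k. sat T (lenv (a @ cs)) p))"
proof (induction k arbitrary: p)
  case 0 then show ?case by (simp add: tuples_0)
next
  case (Suc k)
  have f: "fvf (proj (Suc k + m) p) \<subseteq> {..<k + m}" using fvf_proj[of p "k + m"] Suc.prems by simp
  note IH = Suc.IH[OF f]
  have "sat T (lenv cs) (exk (Suc k) m p) \<longleftrightarrow> (\<exists>a\<in>tuples (sdom T) (Suc k). sat T (lenv (a @ cs)) p)" for cs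
  proof -
    have "sat T (lenv cs) (exk (Suc k) m p) \<longleftrightarrow> (\<exists>a\<in>tuples (sdom T) k. sat T (lenv (a @ cs)) (proj (Suc k + m) p))"
      using IH by simp
    also have "\<dots> \<longleftrightarrow> (\<exists>a\<in>tuples (sdom T) k. \<exists>x\<in>sdom T. sat T (lenv (x # a @ cs)) p)"
      by (intro bex_cong refl sat_proj) (use Suc.prems in simp)
    also have "\<dots> \<longleftrightarrow> (\<exists>a\<in>tuples (sdom T) (Suc k). sat T (lenv (a @ cs)) p)"
      unfolding tuples_Suc by (auto, metis append_Cons, blast)
    finally show ?thesis .
  qed
  then show ?case using IH by (simp add: wff_proj)
qed

lemma def_formula: "pformula fa ra m 0 th \<Longrightarrow> definable0 fa ra T m {b \<in> tuples (sdom T) m. sat T (lenv b) th}"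
  unfolding definable0_def by blast

lemma def_sub: "definable0 fa ra T m D \<Longrightarrow> D \<subseteq> tuples (sdom T) m"
  unfolding definable0_def by auto

lemma def_all: "definable0 fa ra T m (tuples (sdom T) m)"
  unfolding definable0_def pformula_def by (rule exI[of _ "Neg FF"]) auto

lemma def_empty: "definable0 fa ra T m {}"
  unfolding definable0_def pformula_def by (rule exI[of _ "FF"]) auto

lemma def_Int: "definable0 fa ra T m A \<Longrightarrow> definable0 fa ra T m B \<Longrightarrow> definable0 fa ra T m (A \<inter> B)"
  unfolding definable0_def pformula_def
  by (elim exE conjE, rule_tac x="Conj theta thetaa" in exI) auto

lemma def_diff: "definable0 fa ra T m A \<Longrightarrow> definable0 fa ra T m (tuples (sdom T) m - A)"
  unfolding definable0_def pformula_def
  by (elim exE conjE, rule_tac x="Neg theta" in exI) auto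

lemma def_Un: assumes "definable0 fa ra T m A" "definable0 fa ra T m B" shows "definable0 fa ra T m (A \<union> B)"
proof -
  have "A \<union> B = tuples (sdom T) m - ((tuples (sdom T) m - A) \<inter> (tuples (sdom T) m - B))"
    using def_sub assms by blast
  then show ?thesis using def_diff def_Int assms by metis
qed

lemma def_UN: "finite I \<Longrightarrow> (\<And>x. x \<in> I \<Longrightarrow> definable0 fa ra T m (D x)) \<Longrightarrow> definable0 fa ra T m (\<Union>x\<in>I. D x)"
proof (induction I rule: finite_induct)
  case empty then show ?case using def_empty by simp
next
  case (insert a I)
  have "(\<Union>x\<in>insert a I. D x) = D a \<union> (\<Union>x\<in>I. D x)" by simp
  show ?case unfolding \<open>(\<Union>x\<in>insert a I. D x) = D a \<union> (\<Union>x\<in>I. D x)\<close>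
    by (rule def_Un) (use insert in auto)
qed

lemma def_eq: "definable0 fa ra T m A \<Longrightarrow> A = B \<Longrightarrow> definable0 fa ra T m B" by simp



context UF begin

definition ulimP :: "('i \<Rightarrow> real) \<Rightarrow> ereal \<Rightarrow> bool" where
  "ulimP f L \<longleftrightarrow> (\<forall>T. open T \<and> L \<in> T \<longrightarrow> {i. ereal (f i) \<in> T} \<in> U)"

definition dlim :: "('i \<Rightarrow> real) \<Rightarrow> real \<Rightarrow> bool" where
  "dlim f L \<longleftrightarrow> (\<forall>e>0. {i. \<bar>f i - L\<bar> < e} \<in> U)"

lemma ulimP_suff:
  assumes lo: "\<And>a. a < L \<Longrightarrow> {i. a < ereal (f i)} \<in> U"
    and hi: "\<And>b. L < b \<Longrightarrow> {i. ereal (f i) < b} \<in> U"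
  shows "ulimP f L"
  unfolding ulimP_def
proof (intro allI impI, elim conjE)
  fix T :: "ereal set" assume T: "open T" "L \<in> T"
  obtain A where A: "{i. A i} \<in> U" "\<And>i. A i \<Longrightarrow> ereal (f i) \<le> L \<Longrightarrow> ereal (f i) \<in> T"
  proof (cases "\<exists>y. y < L")
    case True
    then obtain y where "y < L" by blast
    from open_left[OF T this] obtain a where a: "a < L" "{a<..L} \<subseteq> T" by blast
    show ?thesis by (rule that[of "\<lambda>i. a < ereal (f i)"]) (use lo[OF a(1)] a(2) in auto)
  next
    case False
    show ?thesis
    proof (rule that[of "\<lambda>i. True"])
      show "{i. True} \<in> U" using uf_UNIV by simp
      fix i assume "ereal (f i) \<le> L"
      then have "ereal (f i) = L" using False by (metis order_le_less)
      then show "ereal (f i) \<in> T" using T by simp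
    qed
  qed
  obtain B where B: "{i. B i} \<in> U" "\<And>i. B i \<Longrightarrow> L \<le> ereal (f i) \<Longrightarrow> ereal (f i) \<in> T"
  proof (cases "\<exists>y. L < y")
    case True
    then obtain y where "L < y" by blast
    from open_right[OF T this] obtain b where b: "L < b" "{L..<b} \<subseteq> T" by blast
    show ?thesis by (rule that[of "\<lambda>i. ereal (f i) < b"]) (use hi[OF b(1)] b(2) in auto)
  next
    case False
    show ?thesis
    proof (rule that[of "\<lambda>i. True"])
      show "{i. True} \<in> U" using uf_UNIV by simp
      fix i assume "L \<le> ereal (f i)"
      then have "ereal (f i) = L" using False by (metis order_le_less)
      then show "ereal (f i) \<in> T" using T by simp
    qed
  qed
  have "{i. A i \<and> B i} \<in> U" using uf_conj A(1) B(1) by blast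
  then show "{i. ereal (f i) \<in> T} \<in> U"
  proof (rule uf_imp)
    fix i assume "A i \<and> B i"
    then show "ereal (f i) \<in> T" using A(2)[of i] B(2)[of i] by (cases "ereal (f i) \<le> L") auto
  qed
qed

lemma ulimP_exists: "\<exists>L. ulimP f L"
proof -
  define Q where "Q = {x. {i. x \<le> ereal (f i)} \<in> U}"
  define L where "L = Sup Q"
  have "ulimP f L"
  proof (rule ulimP_suff)
    fix a assume "a < L"
    then obtain x where x: "x \<in> Q" "a < x" unfolding L_def using less_Sup_iff by blast
    have "{i. x \<le> ereal (f i)} \<in> U" using x(1) Q_def by simp
    then show "{i. a < ereal (f i)} \<in> U" by (rule uf_imp) (use x(2) in \<open>rule less_le_trans\<close>)
  next
    fix b assume b: "L < b"
    show "{i. ereal (f i) < b} \<in> U"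
    proof (rule ccontr)
      assume "{i. ereal (f i) < b} \<notin> U"
      then have "{i. \<not> ereal (f i) < b} \<in> U" using uf_neg by blast
      then have "{i. b \<le> ereal (f i)} \<in> U" by (rule uf_imp) simp
      then have "b \<in> Q" unfolding Q_def by simp
      then have "b \<le> L" unfolding L_def by (rule Sup_upper)
      then show False using b by simp
    qed
  qed
  then show ?thesis by blast
qed

lemma ulimP_unique: "ulimP f L1 \<Longrightarrow> ulimP f L2 \<Longrightarrow> L1 = L2"
proof (rule ccontr)
  assume h: "ulimP f L1" "ulimP f L2" "L1 \<noteq> L2"
  obtain A B where AB: "open A" "open B" "L1 \<in> A" "L2 \<in> B" "A \<inter> B = {}"
    using hausdorff[OF h(3)] by blast
  have "{i. ereal (f i) \<in> A} \<in> U" "{i. ereal (f i) \<in> B} \<in> U" using h AB unfolding ulimP_def by auto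
  then have "{i. ereal (f i) \<in> A \<and> ereal (f i) \<in> B} \<in> U" by (rule uf_conj)
  then obtain i where "ereal (f i) \<in> A \<and> ereal (f i) \<in> B" using uf_ex2 by blast
  then show False using AB(5) by blast
qed

lemma ulim_is: "ulimP f (ulim U f)"
proof -
  obtain L where L: "ulimP f L" using ulimP_exists by blast
  have "(THE L. ulimP f L) = L"
    by (rule the_equality[where P="ulimP f", OF L]) (rule ulimP_unique[OF _ L])
  then have "ulim U f = L" unfolding ulim_def ulimP_def by simp
  then show ?thesis using L by simp
qed

lemma ulim_eqI: "ulimP f L \<Longrightarrow> ulim U f = L"
  using ulim_is ulimP_unique by blast

lemma ulim_char: "ulim U f = ereal L \<longleftrightarrow> dlim f L"
proof
  assume "ulim U f = ereal L"
  then have P: "ulimP f (ereal L)" using ulim_is by metis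
  show "dlim f L" unfolding dlim_def
  proof (intro allI impI)
    fix e :: real assume e: "e > 0"
    have "open {ereal (L - e)<..<ereal (L + e)}" by (rule open_greaterThanLessThan)
    moreover have "ereal L \<in> {ereal (L - e)<..<ereal (L + e)}" using e by simp
    ultimately have "{i. ereal (f i) \<in> {ereal (L - e)<..<ereal (L + e)}} \<in> U"
      using P unfolding ulimP_def by blast
    then show "{i. \<bar>f i - L\<bar> < e} \<in> U" by (rule uf_imp) (simp add: abs_less_iff)
  qed
next
  assume d: "dlim f L"
  have "ulimP f (ereal L)"
  proof (rule ulimP_suff)
    fix a assume a: "a < ereal L"
    show "{i. a < ereal (f i)} \<in> U"
    proof (cases a)
      case (real a')
      then have "L - a' > 0" using a by simp
      then have "{i. \<bar>f i - L\<bar> < L - a'} \<in> U" using d unfolding dlim_def by blast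
      then show ?thesis by (rule uf_imp) (simp add: real abs_less_iff)
    next
      case PInf then show ?thesis using a by simp
    next
      case MInf then show ?thesis using uf_UNIV by simp
    qed
  next
    fix b assume b: "ereal L < b"
    show "{i. ereal (f i) < b} \<in> U"
    proof (cases b)
      case (real b')
      then have "b' - L > 0" using b by simp
      then have "{i. \<bar>f i - L\<bar> < b' - L} \<in> U" using d unfolding dlim_def by blast
      then show ?thesis by (rule uf_imp) (simp add: real abs_less_iff)
    next
      case MInf then show ?thesis using b by simp
    next
      case PInf then show ?thesis using uf_UNIV by simp
    qed
  qed
  then show "ulim U f = ereal L" by (rule ulim_eqI)
qed

lemma ulim_cong: "{i. f i = g i} \<in> U \<Longrightarrow> ulim U f = ulim U g"
proof -
  assume h: "{i. f i = g i} \<in> U"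
  have "{i. ereal (f i) \<in> T} \<in> U \<longleftrightarrow> {i. ereal (g i) \<in> T} \<in> U" for T
    by (rule uf_iff2[OF h]) simp
  then have "ulimP f = ulimP g" unfolding ulimP_def by simp
  then show ?thesis unfolding ulim_def ulimP_def[symmetric] by simp
qed

lemma dlim_unique: "dlim f a \<Longrightarrow> dlim f b \<Longrightarrow> a = b"
  using ulim_char[of f a] ulim_char[of f b] by simp

lemma dlim_cong: "{i. f i = g i} \<in> U \<Longrightarrow> dlim f L \<Longrightarrow> dlim g L"
  using ulim_char[of g L] ulim_char[of f L] ulim_cong[of f g] by simp

lemma dlim_const: assumes h: "{i. f i = c} \<in> U" shows "dlim f c"
  unfolding dlim_def
proof (intro allI impI)
  fix e :: real assume "e > 0"
  then show "{i. \<bar>f i - c\<bar> < e} \<in> U" by (intro uf_imp[OF h]) simp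
qed

end



context UP begin

lemma rl_append: "rl (a @ b) i = rl a i @ rl b i" by (simp add: rl_def)
lemma rl_length[simp]: "length (rl a i) = length a" by (simp add: rl_def)
lemma rl_nth: "v < length a \<Longrightarrow> rl a i ! v = urep (a ! v) i" by (simp add: rl_def)
lemma rl_Nil[simp]: "rl [] i = []" by (simp add: rl_def)
lemma rl_tuples: "a \<in> tuples (sdom M) k \<Longrightarrow> rl a i \<in> tuples (sdom (S i)) k"
  unfolding tuples_def rl_def using urep_dom by auto

lemma los_tuple:
  assumes w: "wff fa ra th" and fv: "fvf th \<subseteq> {..<length b}" and b: "set b \<subseteq> sdom M"
  shows "sat M (lenv b) th \<longleftrightarrow> {i. sat (S i) (lenv (rl b i)) th} \<in> U"
proof -
  define E where "E v = (if v < length b then urep (b ! v) else s0)" for v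
  have Es: "\<forall>v. E v \<in> seqs S" unfolding E_def using urep_in(1) b s0_seqs nth_mem by fastforce
  have "sat M (lenv b) th \<longleftrightarrow> sat M (\<lambda>v. ucls S U (E v)) th"
  proof (rule sat_cong, intro ballI)
    fix v assume "v \<in> fvf th"
    then have v: "v < length b" using fv by auto
    then have "b ! v \<in> sdom M" using b by auto
    then show "lenv b v = ucls S U (E v)" using v urep_in(2) by (simp add: E_def lenv_def)
  qed
  also have "\<dots> \<longleftrightarrow> {i. sat (S i) (\<lambda>v. E v i) th} \<in> U" by (rule sat_los[OF w Es])
  also have "\<dots> \<longleftrightarrow> {i. sat (S i) (lenv (rl b i)) th} \<in> U"
  proof -
    have "sat (S i) (\<lambda>v. E v i) th = sat (S i) (lenv (rl b i)) th" for i
    proof (rule sat_cong, intro ballI)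
      fix v assume "v \<in> fvf th"
      then have v: "v < length b" using fv by auto
      then show "E v i = lenv (rl b i) v" by (simp add: E_def lenv_def rl_nth)
    qed
    then show ?thesis by simp
  qed
  finally show ?thesis .
qed

lemma witness:
  assumes t: "\<And>i. t i \<in> tuples (sdom (S i)) k"
  shows "\<exists>a\<in>tuples (sdom M) k. {i. rl a i = t i} \<in> U"
proof -
  define a where "a = map (\<lambda>j. ucls S U (\<lambda>i. t i ! j)) [0..<k]"
  have sj: "(\<lambda>i. t i ! j) \<in> seqs S" if jk: "j < k" for j
  proof -
    have "t i ! j \<in> sdom (S i)" for i
      using t[of i] nth_mem[of j "t i"] jk unfolding tuples_def by blast
    then show ?thesis unfolding seqs_def by blast
  qed
  have "a \<in> tuples (sdom M) k" unfolding a_def tuples_def using ucls_in[OF sj] by auto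
  moreover have "{i. rl a i = t i} \<in> U"
  proof -
    have "{i. \<forall>j\<in>{..<k}. urep (ucls S U (\<lambda>i. t i ! j)) i = t i ! j} \<in> U"
    proof (rule uf_finite_Inter)
      fix j assume "j \<in> {..<k}"
      then show "{i. urep (ucls S U (\<lambda>i. t i ! j)) i = t i ! j} \<in> U" using urep_ucls[OF sj, of j] by simp
    qed simp
    then show ?thesis
    proof (rule uf_imp)
      fix i assume h: "\<forall>j\<in>{..<k}. urep (ucls S U (\<lambda>i. t i ! j)) i = t i ! j"
      have lt: "length (t i) = k" using t[of i] by (simp add: tuples_def)
      show "rl a i = t i"
      proof (rule nth_equalityI)
        show "length (rl a i) = length (t i)" using lt by (simp add: a_def)
        fix j assume "j < length (rl a i)"
        then have j: "j < k" by (simp add: a_def)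
        then have "rl a i ! j = urep (ucls S U (\<lambda>i. t i ! j)) i" by (simp add: a_def rl_def)
        also have "\<dots> = t i ! j" using h j by simp
        finally show "rl a i ! j = t i ! j" .
      qed
    qed
  qed
  ultimately show ?thesis by blast
qed

lemma transfer:
  assumes h: "{i. \<exists>t\<in>tuples (sdom (S i)) k. R i t} \<in> U"
  shows "\<exists>a\<in>tuples (sdom M) k. {i. R i (rl a i)} \<in> U"
proof -
  define t where "t i = (if \<exists>t\<in>tuples (sdom (S i)) k. R i t then SOME t. t \<in> tuples (sdom (S i)) k \<and> R i t
     else replicate k (s0 i))" for i
  have ti: "t i \<in> tuples (sdom (S i)) k \<and> R i (t i)" if "\<exists>t\<in>tuples (sdom (S i)) k. R i t" for i
  proof -
    have "\<exists>t. t \<in> tuples (sdom (S i)) k \<and> R i t" using that by blast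
    then have "(SOME t. t \<in> tuples (sdom (S i)) k \<and> R i t) \<in> tuples (sdom (S i)) k \<and>
        R i (SOME t. t \<in> tuples (sdom (S i)) k \<and> R i t)" by (rule someI_ex)
    then show ?thesis using that by (simp add: t_def)
  qed
  have "t i \<in> tuples (sdom (S i)) k" for i
  proof (cases "\<exists>t\<in>tuples (sdom (S i)) k. R i t")
    case True then show ?thesis using ti by blast
  next
    case False then show ?thesis using s0_seqs seqs_D[of s0 i] by (auto simp: t_def tuples_def)
  qed
  then obtain a where a: "a \<in> tuples (sdom M) k" "{i. rl a i = t i} \<in> U" using witness by blast
  have "{i. rl a i = t i \<and> (\<exists>t\<in>tuples (sdom (S i)) k. R i t)} \<in> U" using uf_conj[OF a(2) h] .
  then have "{i. R i (rl a i)} \<in> U"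
  proof (rule uf_imp)
    fix i assume "rl a i = t i \<and> (\<exists>t\<in>tuples (sdom (S i)) k. R i t)"
    then show "R i (rl a i)" using ti[of i] by simp
  qed
  then show ?thesis using a(1) by blast
qed

lemma inst_sub: "inst T k p c \<subseteq> tuples (sdom T) k" by (auto simp: inst_def)

lemma inst_mem:
  assumes p: "pformula fa ra k m p" and cs: "cs \<in> tuples (sdom M) m" and a: "a \<in> tuples (sdom M) k"
  shows "a \<in> inst M k p cs \<longleftrightarrow> {i. rl a i \<in> inst (S i) k p (rl cs i)} \<in> U"
proof -
  have l: "length (a @ cs) = k + m" "set (a @ cs) \<subseteq> sdom M" using a cs by (auto simp: tuples_def)
  have "a \<in> inst M k p cs \<longleftrightarrow> sat M (lenv (a @ cs)) p" using a by (simp add: inst_def)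
  also have "\<dots> \<longleftrightarrow> {i. sat (S i) (lenv (rl (a @ cs) i)) p} \<in> U"
    by (rule los_tuple) (use p l in \<open>auto simp: pformula_def\<close>)
  also have "\<dots> \<longleftrightarrow> {i. rl a i \<in> inst (S i) k p (rl cs i)} \<in> U"
    using rl_tuples[OF a] by (simp add: inst_def rl_append)
  finally show ?thesis .
qed

lemma inst_uset:
  assumes p: "pformula fa ra k m p" and cs: "cs \<in> tuples (sdom M) m"
  shows "inst M k p cs = uset S U k (\<lambda>i. inst (S i) k p (rl cs i))"
  using inst_mem[OF p cs] inst_sub[of M k p cs] unfolding uset_def rl_def[symmetric] by blast

lemma uset_unique:
  assumes A: "\<And>i. A i \<subseteq> tuples (sdom (S i)) k" and B: "\<And>i. B i \<subseteq> tuples (sdom (S i)) k"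
    and eq: "uset S U k A = uset S U k B"
  shows "{i. A i = B i} \<in> U"
proof (rule ccontr)
  assume "{i. A i = B i} \<notin> U"
  then have "{i. A i \<noteq> B i} \<in> U" using uf_neg by simp
  then have "{i. \<not> A i \<subseteq> B i} \<union> {i. \<not> B i \<subseteq> A i} \<in> U" by (rule uf_mono) auto
  then have "{i. \<not> A i \<subseteq> B i} \<in> U \<or> {i. \<not> B i \<subseteq> A i} \<in> U" by (rule uf_Un)
  moreover have key: False if AB: "\<And>i. A i \<subseteq> tuples (sdom (S i)) k" "\<And>i. B i \<subseteq> tuples (sdom (S i)) k"
      "uset S U k A = uset S U k B" "{i. \<not> A i \<subseteq> B i} \<in> U" for A B
  proof -
    have "{i. \<exists>t\<in>tuples (sdom (S i)) k. t \<in> A i \<and> t \<notin> B i} \<in> U"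
      using AB(4) by (rule uf_imp) (use AB(1) in blast)
    then obtain a where a: "a \<in> tuples (sdom M) k" "{i. rl a i \<in> A i \<and> rl a i \<notin> B i} \<in> U"
      using transfer[of k "\<lambda>i t. t \<in> A i \<and> t \<notin> B i"] by blast
    have "{i. rl a i \<in> A i} \<in> U" using a(2) by (rule uf_imp) simp
    then have "a \<in> uset S U k A" using a(1) unfolding uset_def rl_def by simp
    moreover have "a \<notin> uset S U k B"
    proof
      assume "a \<in> uset S U k B"
      then have "{i. rl a i \<in> B i} \<in> U" unfolding uset_def rl_def by simp
      then have "{i. rl a i \<in> B i \<and> (rl a i \<in> A i \<and> rl a i \<notin> B i)} \<in> U" using a(2) by (rule uf_conj)
      then show False using uf_ex2 by auto
    qed
    ultimately show False using AB(3) by simp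
  qed
  ultimately show False using key[OF A B eq] key[OF B A eq[symmetric]] by blast
qed

lemma urepr_eq:
  assumes A: "\<And>i. A i \<subseteq> tuples (sdom (S i)) k" and D: "D = uset S U k A"
  shows "{i. urepr S U k D i = A i} \<in> U"
proof -
  have "(\<forall>i. urepr S U k D i \<subseteq> tuples (sdom (S i)) k) \<and> D = uset S U k (urepr S U k D)"
    unfolding urepr_def by (rule someI[of _ A]) (use A D in auto)
  then have U1: "\<And>i. urepr S U k D i \<subseteq> tuples (sdom (S i)) k" and U2: "D = uset S U k (urepr S U k D)"
    by auto
  show ?thesis using uset_unique[OF U1 A] U2 D by simp
qed

definition LX :: "nat \<Rightarrow> ('i \<Rightarrow> 'a) set list set \<Rightarrow> 'i \<Rightarrow> real" where
  "LX n X i = lg (card (urepr S U n X i))"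

definition G :: "nat \<Rightarrow> ('i \<Rightarrow> 'a) set list set \<Rightarrow> nat \<Rightarrow> ('f, 'r) form \<Rightarrow> ('i \<Rightarrow> 'a) set list \<Rightarrow> 'i \<Rightarrow> real" where
  "G n X k p cs i = lg (card (inst (S i) k p (rl cs i))) / LX n X i"

lemma udelta_G:
  assumes p: "pformula fa ra k m p" and cs: "cs \<in> tuples (sdom M) m"
  shows "udelta S U n X k (inst M k p cs) = ulim U (G n X k p cs)"
proof -
  have "{i. urepr S U k (inst M k p cs) i = inst (S i) k p (rl cs i)} \<in> U"
    by (rule urepr_eq[OF inst_sub inst_uset[OF p cs]])
  then have "{i. lg (card (urepr S U k (inst M k p cs) i)) / lg (card (urepr S U n X i)) = G n X k p cs i} \<in> U"
    by (rule uf_imp) (simp add: G_def LX_def)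
  then show ?thesis unfolding udelta_def by (rule ulim_cong)
qed

lemma udelta_dlim:
  assumes p: "pformula fa ra k m p" and cs: "cs \<in> tuples (sdom M) m"
  shows "udelta S U n X k (inst M k p cs) = ereal L \<longleftrightarrow> dlim (G n X k p cs) L"
  using udelta_G[OF p cs] ulim_char by simp

end


lemma lg_pos: "n > 0 \<Longrightarrow> lg n = ln (real n)" by (simp add: lg_def)

lemma H1:
  fixes x L a e :: real
  assumes x: "x > 0" and L: "L > 0" and h: "\<bar>ln x / L - a\<bar> < e"
  shows "exp (L * (a - e)) < x" "x < exp (L * (a + e))"
proof -
  have "a - e < ln x / L" "ln x / L < a + e" using h by linarith+
  then have "L * (a - e) < ln x" "ln x < L * (a + e)" using L by (simp_all add: field_simps)
  then show "exp (L * (a - e)) < x" "x < exp (L * (a + e))" using x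
    by (metis exp_less_cancel_iff exp_ln)+
qed

lemma H2:
  fixes x L lo hi :: real
  assumes x: "x > 0" and L: "L > 0" and lo: "exp (L * lo) < x" and hi: "x < exp (L * hi)"
  shows "lo < ln x / L" "ln x / L < hi"
proof -
  have "L * lo < ln x" using lo x by (metis exp_less_cancel_iff exp_ln)
  then show "lo < ln x / L" using L by (simp add: field_simps)
  have "ln x < L * hi" using hi x by (metis exp_less_cancel_iff exp_ln)
  then show "ln x / L < hi" using L by (simp add: field_simps)
qed

lemma sum_cover:
  fixes f :: "'b \<Rightarrow> nat" and r :: nat
  assumes T: "finite T" and PT: "\<And>j. P j \<subseteq> T" and cov: "\<And>a. a \<in> T \<Longrightarrow> f a > 0 \<Longrightarrow> \<exists>j\<le>r. a \<in> P j"
  shows "(\<Sum>a\<in>T. f a) \<le> (\<Sum>j\<le>r. \<Sum>a\<in>P j. f a)"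
proof -
  have "(\<Sum>a\<in>T. f a) \<le> (\<Sum>a\<in>T. \<Sum>j\<le>r. if a \<in> P j then f a else 0)"
  proof (rule sum_mono)
    fix a assume a: "a \<in> T"
    show "f a \<le> (\<Sum>j\<le>r. if a \<in> P j then f a else 0)"
    proof (cases "f a = 0")
      case False
      then obtain j where j: "j \<le> r" "a \<in> P j" using cov[OF a] by blast
      have "f a = (if a \<in> P j then f a else 0)" using j by simp
      also have "\<dots> \<le> (\<Sum>j\<le>r. if a \<in> P j then f a else 0)"
        by (rule member_le_sum) (use j in auto)
      finally show ?thesis .
    qed simp
  qed
  also have "\<dots> = (\<Sum>j\<le>r. \<Sum>a\<in>T. if a \<in> P j then f a else 0)" by (rule sum.swap)
  also have "\<dots> = (\<Sum>j\<le>r. \<Sum>a\<in>P j. f a)"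
  proof (rule sum.cong[OF refl])
    fix j
    have "(\<Sum>a\<in>T. if a \<in> P j then f a else 0) = (\<Sum>a\<in>T \<inter> P j. f a)"
      using sum.inter_restrict[OF T, of f "P j"] by simp
    also have "T \<inter> P j = P j" using PT by blast
    finally show "(\<Sum>a\<in>T. if a \<in> P j then f a else 0) = (\<Sum>a\<in>P j. f a)" by simp
  qed
  finally show ?thesis .
qed


context UF begin

lemma count_core:
  fixes L :: "'i \<Rightarrow> real" and T :: "'i \<Rightarrow> 'b set" and Fb :: "'i \<Rightarrow> 'b \<Rightarrow> nat"
    and P :: "nat \<Rightarrow> 'i \<Rightarrow> 'b set" and l :: "nat \<Rightarrow> nat" and Nc :: "'i \<Rightarrow> nat" and r :: nat
  assumes Linf: "\<And>K. {i. L i > K} \<in> U"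
    and finT: "\<And>i. finite (T i)"
    and PT: "\<And>j i. P j i \<subseteq> T i"
    and Nc: "\<And>i. Nc i = (\<Sum>a\<in>T i. Fb i a)"
    and cover: "{i. \<forall>a\<in>T i. Fb i a > 0 \<longrightarrow> (\<exists>j\<le>r. a \<in> P j i)} \<in> U"
    and fibB: "\<And>e j. e > 0 \<Longrightarrow> j \<le> r \<Longrightarrow>
        {i. \<forall>a\<in>P j i. Fb i a > 0 \<and> \<bar>ln (real (Fb i a)) / L i - real j\<bar> < e} \<in> U"
    and PB: "\<And>j. j \<le> r \<Longrightarrow> dlim (\<lambda>i. lg (card (P j i)) / L i) (real (l j))"
  defines "J \<equiv> {j. j \<le> r \<and> {i. P j i \<noteq> {}} \<in> U}"
  shows "dlim (\<lambda>i. lg (Nc i) / L i) (if J = {} then 0 else real (Max ((\<lambda>j. l j + j) ` J)))"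
proof (cases "J = {}")
  case True
  have "{i. \<forall>j\<in>{..r}. P j i = {}} \<in> U"
  proof (rule uf_finite_Inter)
    fix j assume "j \<in> {..r}"
    then have "{i. P j i \<noteq> {}} \<notin> U" using True unfolding J_def by auto
    then show "{i. P j i = {}} \<in> U" using uf_neg[of "\<lambda>i. P j i = {}"] by simp
  qed simp
  then have "{i. (\<forall>j\<in>{..r}. P j i = {}) \<and> (\<forall>a\<in>T i. Fb i a > 0 \<longrightarrow> (\<exists>j\<le>r. a \<in> P j i))} \<in> U"
    using cover by (rule uf_conj)
  then have "{i. lg (Nc i) / L i = 0} \<in> U"
  proof (rule uf_imp)
    fix i assume h: "(\<forall>j\<in>{..r}. P j i = {}) \<and> (\<forall>a\<in>T i. Fb i a > 0 \<longrightarrow> (\<exists>j\<le>r. a \<in> P j i))"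
    then have "\<forall>a\<in>T i. Fb i a = 0" by auto
    then have "Nc i = 0" using Nc by simp
    then show "lg (Nc i) / L i = 0" by (simp add: lg_def)
  qed
  then show ?thesis using True by (simp add: dlim_const)
next
  case False
  have finJ: "finite J" unfolding J_def by simp
  define V where "V = Max ((\<lambda>j. l j + j) ` J)"
  have "V \<in> (\<lambda>j. l j + j) ` J" unfolding V_def using finJ False by (intro Max_in) auto
  then obtain j0 where j0: "j0 \<in> J" "l j0 + j0 = V" by auto
  have Vge: "j \<in> J \<Longrightarrow> l j + j \<le> V" for j
    unfolding V_def using finJ by (intro Max_ge) auto
  have "dlim (\<lambda>i. lg (Nc i) / L i) (real V)"
    unfolding dlim_def
  proof (intro allI impI)
    fix e :: real assume e: "e > 0"
    define e' where "e' = e / 4"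
    have e': "e' > 0" using e by (simp add: e'_def)
    have S1: "{i. L i > max 0 (ln (real r + 1) / e')} \<in> U" by (rule Linf)
    have S3: "{i. \<forall>j\<in>{..r}. \<forall>a\<in>P j i. Fb i a > 0 \<and> \<bar>ln (real (Fb i a)) / L i - real j\<bar> < e'} \<in> U"
      by (rule uf_finite_Inter) (use fibB e' in auto)
    have S4: "{i. \<forall>j\<in>{..r}. \<bar>lg (card (P j i)) / L i - real (l j)\<bar> < e'} \<in> U"
      by (rule uf_finite_Inter) (use PB e' in \<open>auto simp: dlim_def\<close>)
    have S5: "{i. \<forall>j\<in>{..r}. j \<notin> J \<longrightarrow> P j i = {}} \<in> U"
    proof (rule uf_finite_Inter)
      fix j assume j: "j \<in> {..r}"
      show "{i. j \<notin> J \<longrightarrow> P j i = {}} \<in> U"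
      proof (cases "j \<in> J")
        case True then show ?thesis using uf_UNIV by simp
      next
        case False
        then have "{i. P j i \<noteq> {}} \<notin> U" using j unfolding J_def by auto
        then have "{i. P j i = {}} \<in> U" using uf_neg[of "\<lambda>i. P j i = {}"] by simp
        then show ?thesis by (rule uf_imp) simp
      qed
    qed simp
    have S6: "{i. P j0 i \<noteq> {}} \<in> U" using j0 unfolding J_def by simp
    have all: "{i. L i > max 0 (ln (real r + 1) / e') \<and>
        (\<forall>a\<in>T i. Fb i a > 0 \<longrightarrow> (\<exists>j\<le>r. a \<in> P j i)) \<and>
        (\<forall>j\<in>{..r}. \<forall>a\<in>P j i. Fb i a > 0 \<and> \<bar>ln (real (Fb i a)) / L i - real j\<bar> < e') \<and>
        (\<forall>j\<in>{..r}. \<bar>lg (card (P j i)) / L i - real (l j)\<bar> < e') \<and>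
        (\<forall>j\<in>{..r}. j \<notin> J \<longrightarrow> P j i = {}) \<and> P j0 i \<noteq> {}} \<in> U"
      using uf_conj[OF S1 uf_conj[OF cover uf_conj[OF S3 uf_conj[OF S4 uf_conj[OF S5 S6]]]]] .
    show "{i. \<bar>lg (Nc i) / L i - real V\<bar> < e} \<in> U"
    proof (rule uf_imp[OF all], elim conjE)
      fix i
      assume a1: "L i > max 0 (ln (real r + 1) / e')"
        and a2: "\<forall>a\<in>T i. Fb i a > 0 \<longrightarrow> (\<exists>j\<le>r. a \<in> P j i)"
        and a3: "\<forall>j\<in>{..r}. \<forall>a\<in>P j i. Fb i a > 0 \<and> \<bar>ln (real (Fb i a)) / L i - real j\<bar> < e'"
        and a4: "\<forall>j\<in>{..r}. \<bar>lg (card (P j i)) / L i - real (l j)\<bar> < e'"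
        and a5: "\<forall>j\<in>{..r}. j \<notin> J \<longrightarrow> P j i = {}"
        and a6: "P j0 i \<noteq> {}"
      define Li where "Li = L i"
      have Li: "Li > 0" using a1 by (simp add: Li_def)
      have Lie: "ln (real r + 1) < Li * e'" using a1 e' by (simp add: Li_def field_simps)
      have "real r + 1 = exp (ln (real r + 1))" by simp
      then have r1: "real r + 1 < exp (Li * e')" using Lie exp_less_mono by metis
      have finP: "finite (P j i)" for j using finite_subset[OF PT finT] .
      have fibs: "exp (Li * (real j - e')) < real (Fb i a) \<and> real (Fb i a) < exp (Li * (real j + e'))"
        if "j \<le> r" "a \<in> P j i" for j a
      proof -
        have "Fb i a > 0" "\<bar>ln (real (Fb i a)) / Li - real j\<bar> < e'" using a3 that by (auto simp: Li_def)
        then show ?thesis using H1[of "real (Fb i a)" Li "real j" e'] Li by simp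
      qed
      have cards: "exp (Li * (real (l j) - e')) < real (card (P j i)) \<and> real (card (P j i)) < exp (Li * (real (l j) + e'))"
        if "j \<le> r" "P j i \<noteq> {}" for j
      proof -
        have c: "card (P j i) > 0" using finP that by (simp add: card_gt_0_iff)
        have "\<bar>lg (card (P j i)) / Li - real (l j)\<bar> < e'" using a4 that by (simp add: Li_def)
        then have "\<bar>ln (real (card (P j i))) / Li - real (l j)\<bar> < e'" using lg_pos[OF c] by simp
        then show ?thesis using H1[of "real (card (P j i))" Li "real (l j)" e'] Li c by simp
      qed
      have upj: "(\<Sum>a\<in>P j i. real (Fb i a)) \<le> exp (Li * (real V + 2 * e'))" if j: "j \<le> r" for j
      proof (cases "P j i = {}")
        case True then show ?thesis by simp
      next
        case False
        then have "j \<in> J" using a5 j by auto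
        then have "l j + j \<le> V" using Vge by blast
        then have jV: "real (l j) + real j \<le> real V" by (simp only: of_nat_add[symmetric] of_nat_le_iff)
        have "(\<Sum>a\<in>P j i. real (Fb i a)) \<le> (\<Sum>a\<in>P j i. exp (Li * (real j + e')))"
          by (rule sum_mono) (use fibs j in \<open>auto intro: less_imp_le\<close>)
        also have "\<dots> = real (card (P j i)) * exp (Li * (real j + e'))" by simp
        also have "\<dots> \<le> exp (Li * (real (l j) + e')) * exp (Li * (real j + e'))"
          using cards[OF j False] by (intro mult_right_mono) auto
        also have "\<dots> = exp (Li * (real (l j) + real j + 2 * e'))" by (simp add: exp_add[symmetric] algebra_simps)
        also have "\<dots> \<le> exp (Li * (real V + 2 * e'))" using jV Li by simp
        finally show ?thesis .
      qed
      have "real (Nc i) \<le> real (\<Sum>j\<le>r. \<Sum>a\<in>P j i. Fb i a)"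
        unfolding Nc by (subst of_nat_le_iff) (rule sum_cover[OF finT PT]; use a2 in blast)
      also have "\<dots> = (\<Sum>j\<le>r. \<Sum>a\<in>P j i. real (Fb i a))" by simp
      also have "\<dots> \<le> (\<Sum>j\<le>r. exp (Li * (real V + 2 * e')))" by (rule sum_mono) (use upj in auto)
      also have "\<dots> = (real r + 1) * exp (Li * (real V + 2 * e'))" by simp
      also have "\<dots> < exp (Li * e') * exp (Li * (real V + 2 * e'))" using r1 by simp
      also have "\<dots> = exp (Li * (real V + 3 * e'))" by (simp add: exp_add[symmetric] algebra_simps)
      finally have up: "real (Nc i) < exp (Li * (real V + 3 * e'))" .
      have j0r: "j0 \<le> r" using j0 unfolding J_def by simp
      have rV: "real V = real (l j0) + real j0" using j0(2) by (simp only: of_nat_add[symmetric])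
      have "Li * (real V - 2 * e') = Li * (real (l j0) - e') + Li * (real j0 - e')"
        unfolding rV by (simp add: algebra_simps)
      then have "exp (Li * (real V - 2 * e')) = exp (Li * (real (l j0) - e')) * exp (Li * (real j0 - e'))"
        by (simp add: exp_add)
      also have "\<dots> < real (card (P j0 i)) * exp (Li * (real j0 - e'))"
        using cards[OF j0r a6] by (intro mult_strict_right_mono) auto
      also have "\<dots> = (\<Sum>a\<in>P j0 i. exp (Li * (real j0 - e')))" by simp
      also have "\<dots> \<le> (\<Sum>a\<in>P j0 i. real (Fb i a))"
        by (rule sum_mono) (use fibs j0r in \<open>auto intro: less_imp_le\<close>)
      also have "\<dots> \<le> (\<Sum>a\<in>T i. real (Fb i a))"
        by (rule sum_mono2[OF finT PT]) simp
      also have "\<dots> = real (Nc i)" using Nc by simp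
      finally have lo: "exp (Li * (real V - 2 * e')) < real (Nc i)" .
      have Npos: "real (Nc i) > 0" using lo exp_gt_zero[of "Li * (real V - 2 * e')"] by linarith
      then have "Nc i > 0" by simp
      then have lgN: "lg (Nc i) = ln (real (Nc i))" by (rule lg_pos)
      have "real V - 2 * e' < ln (real (Nc i)) / Li" "ln (real (Nc i)) / Li < real V + 3 * e'"
        using H2[OF Npos Li lo up] by auto
      then show "\<bar>lg (Nc i) / L i - real V\<bar> < e" using e' unfolding lgN Li_def[symmetric] e'_def
        by (simp add: abs_less_iff)
    qed
  qed
  then show ?thesis using False by (simp add: V_def)
qed

end



lemma finite_tuples: "finite D \<Longrightarrow> finite (tuples D k)"
  unfolding tuples_def using finite_lists_length_eq[of D k] by (simp add: conj_commute)

lemma inst_sub: "inst T k p c \<subseteq> tuples (sdom T) k" by (auto simp: inst_def)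

lemma inst_Suc_eq: "inst T (Suc k) p c = (\<Union>a\<in>tuples (sdom T) k. (\<lambda>y. y @ a) ` inst T 1 p (a @ c))"
proof (rule set_eqI, rule iffI)
  fix t assume "t \<in> inst T (Suc k) p c"
  then obtain x a where t: "t = x # a" "x \<in> sdom T" "a \<in> tuples (sdom T) k" "sat T (lenv (t @ c)) p"
    unfolding inst_def tuples_Suc by blast
  have "[x] \<in> inst T 1 p (a @ c)" using t unfolding inst_def tuples_def by simp
  then have "t \<in> (\<lambda>y. y @ a) ` inst T 1 p (a @ c)" using t(1) by (intro image_eqI[of _ _ "[x]"]) simp_all
  then show "t \<in> (\<Union>a\<in>tuples (sdom T) k. (\<lambda>y. y @ a) ` inst T 1 p (a @ c))" using t(3) by blast
next
  fix t assume "t \<in> (\<Union>a\<in>tuples (sdom T) k. (\<lambda>y. y @ a) ` inst T 1 p (a @ c))"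
  then obtain a y where a: "a \<in> tuples (sdom T) k" "y \<in> inst T 1 p (a @ c)" "t = y @ a" by blast
  then obtain x where y: "y = [x]" "x \<in> sdom T" "sat T (lenv ([x] @ a @ c)) p"
    unfolding inst_def tuples_def by (auto simp: length_Suc_conv)
  have "t \<in> tuples (sdom T) (Suc k)" using a y unfolding tuples_def by simp
  moreover have "sat T (lenv (t @ c)) p" using a y by simp
  ultimately show "t \<in> inst T (Suc k) p c" unfolding inst_def by simp
qed

lemma card_inst_Suc:
  assumes fin: "finite (sdom T)"
  shows "card (inst T (Suc k) p c) = (\<Sum>a\<in>tuples (sdom T) k. card (inst T 1 p (a @ c)))"
proof -
  have fi: "finite (inst T 1 p (a @ c))" for a
    using finite_subset[OF inst_sub finite_tuples[OF fin]] .
  have "card (inst T (Suc k) p c) = (\<Sum>a\<in>tuples (sdom T) k. card ((\<lambda>y. y @ a) ` inst T 1 p (a @ c)))"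
    unfolding inst_Suc_eq
  proof (rule card_UN_disjoint)
    show "finite (tuples (sdom T) k)" by (rule finite_tuples[OF fin])
    show "\<forall>a\<in>tuples (sdom T) k. finite ((\<lambda>y. y @ a) ` inst T 1 p (a @ c))" using fi by simp
    show "\<forall>a\<in>tuples (sdom T) k. \<forall>b\<in>tuples (sdom T) k. a \<noteq> b \<longrightarrow>
        (\<lambda>y. y @ a) ` inst T 1 p (a @ c) \<inter> (\<lambda>y. y @ b) ` inst T 1 p (b @ c) = {}"
    proof (intro ballI impI)
      fix a b assume "a \<in> tuples (sdom T) k" "b \<in> tuples (sdom T) k" "a \<noteq> b"
      have l1: "\<And>y. y \<in> inst T 1 p d \<Longrightarrow> length y = 1" for d using inst_sub unfolding tuples_def by blast
      show "(\<lambda>y. y @ a) ` inst T 1 p (a @ c) \<inter> (\<lambda>y. y @ b) ` inst T 1 p (b @ c) = {}"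
      proof (rule ccontr)
        assume "(\<lambda>y. y @ a) ` inst T 1 p (a @ c) \<inter> (\<lambda>y. y @ b) ` inst T 1 p (b @ c) \<noteq> {}"
        then obtain y z where "y \<in> inst T 1 p (a @ c)" "z \<in> inst T 1 p (b @ c)" "y @ a = z @ b" by blast
        then have "length y = length z" "y @ a = z @ b" using l1 by auto
        then have "a = b" by simp
        then show False using \<open>a \<noteq> b\<close> by simp
      qed
    qed
  qed
  also have "\<dots> = (\<Sum>a\<in>tuples (sdom T) k. card (inst T 1 p (a @ c)))"
    by (rule sum.cong[OF refl], rule card_image) (simp add: inj_on_def)
  finally show ?thesis .
qed

context UP begin

lemma inst_ne:
  assumes p: "pformula fa ra k m q" and cs: "cs \<in> tuples (sdom M) m"
  shows "inst M k q cs \<noteq> {} \<longleftrightarrow> {i. inst (S i) k q (rl cs i) \<noteq> {}} \<in> U"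
proof
  assume "inst M k q cs \<noteq> {}"
  then obtain a where a: "a \<in> inst M k q cs" by blast
  then have "a \<in> tuples (sdom M) k" using inst_sub by blast
  then have "{i. rl a i \<in> inst (S i) k q (rl cs i)} \<in> U" using inst_mem[OF p cs] a by blast
  then show "{i. inst (S i) k q (rl cs i) \<noteq> {}} \<in> U" by (rule uf_imp) blast
next
  assume h: "{i. inst (S i) k q (rl cs i) \<noteq> {}} \<in> U"
  have "{i. \<exists>t\<in>tuples (sdom (S i)) k. t \<in> inst (S i) k q (rl cs i)} \<in> U"
    using h by (rule uf_imp) (use inst_sub in blast)
  then obtain a where a: "a \<in> tuples (sdom M) k" "{i. rl a i \<in> inst (S i) k q (rl cs i)} \<in> U"
    using transfer[of k "\<lambda>i t. t \<in> inst (S i) k q (rl cs i)"] by blast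
  then have "a \<in> inst M k q cs" using inst_mem[OF p cs] by blast
  then show "inst M k q cs \<noteq> {}" by blast
qed

lemma tuples_append: "a \<in> tuples D k \<Longrightarrow> b \<in> tuples D m \<Longrightarrow> a @ b \<in> tuples D (k + m)"
  unfolding tuples_def by auto

end


context UP begin

definition claim :: "nat \<Rightarrow> ('i \<Rightarrow> 'a) set list set \<Rightarrow> nat \<Rightarrow> nat \<Rightarrow> bool" where
  "claim n X r k \<longleftrightarrow> (\<forall>p m. pformula fa ra k m p \<longrightarrow>
     (\<forall>cs\<in>tuples (sdom M) m. \<exists>l\<le>k * r. dlim (G n X k p cs) (real l)) \<and>
     (\<forall>l. definable0 fa ra M m {cs \<in> tuples (sdom M) m. dlim (G n X k p cs) (real l)}))"

lemma uf_all: "(\<And>i. P i) \<Longrightarrow> {i. P i} \<in> U"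
  using uf_UNIV by simp

lemma inst1_ne: "inst T 1 p d \<noteq> {} \<longleftrightarrow> (\<exists>x\<in>sdom T. sat T (lenv (x # d)) p)"
proof -
  have "tuples (sdom T) 1 = {[x] | x. x \<in> sdom T}" using tuples_Suc[of "sdom T" 0] by (simp add: tuples_0)
  then show ?thesis unfolding inst_def by auto
qed

lemma max_val:
  fixes w :: "nat \<Rightarrow> nat"
  assumes "finite J"
  shows "(if J = {} then 0 else Max (w ` J)) = l \<longleftrightarrow> (\<forall>j\<in>J. w j \<le> l) \<and> (l = 0 \<or> (\<exists>j\<in>J. w j = l))"
proof (cases "J = {}")
  case True then show ?thesis by auto
next
  case False
  have "Max (w ` J) = l \<longleftrightarrow> l \<in> w ` J \<and> (\<forall>a\<in>w ` J. a \<le> l)"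
    using Max_eq_iff[of "w ` J" l] assms False by auto
  moreover have "(\<forall>j\<in>J. w j \<le> l) \<and> l = 0 \<Longrightarrow> \<exists>j\<in>J. w j = l" using False by auto
  ultimately show ?thesis using False by auto
qed

lemma value_set:
  assumes "\<And>cs. cs \<in> A \<Longrightarrow> dlim (f cs) (real (v cs))"
  shows "{cs \<in> A. dlim (f cs) (real l)} = {cs \<in> A. v cs = l}"
proof -
  have "dlim (f cs) (real l) \<longleftrightarrow> v cs = l" if "cs \<in> A" for cs
    using assms[OF that] dlim_unique[of "f cs" "real (v cs)" "real l"] by auto
  then show ?thesis by blast
qed

lemma claim_0: "claim n X r 0"
  unfolding claim_def
proof (intro allI impI)
  fix p m assume p: "pformula fa ra 0 m p"
  have z: "dlim (G n X 0 p cs) 0" for cs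
  proof (rule dlim_const, rule uf_all)
    fix i
    have sub: "inst (S i) 0 p (rl cs i) \<subseteq> {[]}" using inst_sub[of "S i" 0 p] by (simp add: tuples_0)
    have "card (inst (S i) 0 p (rl cs i)) \<le> 1" using card_mono[of "{[]}", OF _ sub] by simp
    then have "card (inst (S i) 0 p (rl cs i)) = 0 \<or> card (inst (S i) 0 p (rl cs i)) = 1" by linarith
    then show "G n X 0 p cs i = 0" unfolding G_def lg_def by (elim disjE) simp_all
  qed
  have A: "\<forall>cs\<in>tuples (sdom M) m. \<exists>l\<le>0 * r. dlim (G n X 0 p cs) (real l)" using z by simp
  have B: "\<forall>l. definable0 fa ra M m {cs \<in> tuples (sdom M) m. dlim (G n X 0 p cs) (real l)}"
  proof
    fix l
    have veq: "{cs \<in> tuples (sdom M) m. dlim (G n X 0 p cs) (real l)} = {cs \<in> tuples (sdom M) m. (0::nat) = l}"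
      by (rule value_set) (use z in simp)
    show "definable0 fa ra M m {cs \<in> tuples (sdom M) m. dlim (G n X 0 p cs) (real l)}"
    proof (cases "l = 0")
      case True then show ?thesis using def_all veq by simp
    next
      case False
      then have e0: "{cs \<in> tuples (sdom M) m. dlim (G n X 0 p cs) (real l)} = {}" using veq by simp
      show ?thesis unfolding e0 by (rule def_empty)
    qed
  qed
  show "(\<forall>cs\<in>tuples (sdom M) m. \<exists>l\<le>0 * r. dlim (G n X 0 p cs) (real l)) \<and>
     (\<forall>l. definable0 fa ra M m {cs \<in> tuples (sdom M) m. dlim (G n X 0 p cs) (real l)})" using A B by blast
qed


lemma claim_Suc:
  assumes Linf: "\<And>K. {i. LX n X i > K} \<in> U"
    and HV: "\<And>phi m b. pformula fa ra 1 m phi \<Longrightarrow> b \<in> tuples (sdom M) m \<Longrightarrow> \<exists>j\<le>r. dlim (G n X 1 phi b) (real j)"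
    and HD: "\<And>phi m j. pformula fa ra 1 m phi \<Longrightarrow> j \<le> r \<Longrightarrow>
        definable0 fa ra M m {b \<in> tuples (sdom M) m. dlim (G n X 1 phi b) (real j)}"
    and IH: "claim n X r k"
  shows "claim n X r (Suc k)"
  unfolding claim_def
proof (intro allI impI)
  fix p m assume p: "pformula fa ra (Suc k) m p"
  have p1: "pformula fa ra 1 (k + m) p" using p by (simp add: pformula_def)
  have "\<forall>j. \<exists>th. j \<le> r \<longrightarrow> pformula fa ra (k + m) 0 th \<and>
     {b \<in> tuples (sdom M) (k + m). dlim (G n X 1 p b) (real j)} = {b \<in> tuples (sdom M) (k + m). sat M (lenv b) th}"
    using HD[OF p1] unfolding definable0_def by blast
  then obtain th where th: "\<And>j. j \<le> r \<Longrightarrow> pformula fa ra (k + m) 0 (th j) \<and>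
     {b \<in> tuples (sdom M) (k + m). dlim (G n X 1 p b) (real j)} = {b \<in> tuples (sdom M) (k + m). sat M (lenv b) (th j)}"
    using choice[of "\<lambda>j th. j \<le> r \<longrightarrow> pformula fa ra (k + m) 0 th \<and>
     {b \<in> tuples (sdom M) (k + m). dlim (G n X 1 p b) (real j)} = {b \<in> tuples (sdom M) (k + m). sat M (lenv b) th}"]
    by blast
  have thp: "pformula fa ra (k + m) 0 (th j)" if "j \<le> r" for j using th[OF that] by blast
  have thsem: "sat M (lenv b) (th j) \<longleftrightarrow> dlim (G n X 1 p b) (real j)"
    if "j \<le> r" "b \<in> tuples (sdom M) (k + m)" for j b
    using th[OF that(1)] that(2) by blast
  have thlos: "sat M (lenv b) (th j) \<longleftrightarrow> {i. sat (S i) (lenv (rl b i)) (th j)} \<in> U"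
    if "j \<le> r" "b \<in> tuples (sdom M) (k + m)" for j b
    by (rule los_tuple) (use thp[OF that(1)] that(2) in \<open>auto simp: pformula_def tuples_def\<close>)
  define chi where "chi j = proj (Suc (k + m)) (Conj p (renf Suc (th j)))" for j
  have fvC: "fvf (Conj p (renf Suc (th j))) \<subseteq> {..<Suc (k + m)}" if "j \<le> r" for j
  proof -
    have "fvf (renf Suc (th j)) = Suc ` fvf (th j)" by (rule fvf_ren) simp
    also have "\<dots> \<subseteq> {..<Suc (k + m)}" using thp[OF that] by (auto simp: pformula_def)
    finally show ?thesis using p by (auto simp: pformula_def)
  qed
  have chip: "pformula fa ra k m (chi j)" if "j \<le> r" for j
    unfolding pformula_def chi_def
    using fvf_proj[OF fvC[OF that]] wff_proj[of fa ra] wff_ren[of fa ra] p thp[OF that]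
    by (simp add: pformula_def)
  have chisem: "sat T (lenv l) (chi j) \<longleftrightarrow> (\<exists>x\<in>sdom T. sat T (lenv (x # l)) p) \<and> sat T (lenv l) (th j)"
    if "j \<le> r" for j T l
  proof -
    have "sat T (lenv l) (chi j) \<longleftrightarrow> (\<exists>x\<in>sdom T. sat T (lenv (x # l)) (Conj p (renf Suc (th j))))"
      unfolding chi_def by (rule sat_proj[OF fvC[OF that]])
    also have "\<dots> \<longleftrightarrow> (\<exists>x\<in>sdom T. sat T (lenv (x # l)) p \<and> sat T (lenv l) (th j))"
      by (simp add: sat_ren lenv_Cons_Suc)
    finally show ?thesis by blast
  qed
  have IHv: "\<exists>l\<le>k * r. dlim (G n X k (chi j) cs) (real l)" if "j \<le> r" "cs \<in> tuples (sdom M) m" for j cs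
    using IH chip[OF that(1)] that(2) unfolding claim_def by blast
  have IHd: "definable0 fa ra M m {cs \<in> tuples (sdom M) m. dlim (G n X k (chi j) cs) (real l)}"
    if "j \<le> r" for j l
    using IH chip[OF that(1)] unfolding claim_def by blast
  define Jc where "Jc cs = {j. j \<le> r \<and> inst M k (chi j) cs \<noteq> {}}" for cs
  define lv where "lv j cs = (SOME l. l \<le> k * r \<and> dlim (G n X k (chi j) cs) (real l))" for j cs
  have lv: "lv j cs \<le> k * r \<and> dlim (G n X k (chi j) cs) (real (lv j cs))"
    if "j \<le> r" "cs \<in> tuples (sdom M) m" for j cs
    unfolding lv_def using IHv[OF that] by (rule someI_ex)
  define val where "val cs = (if Jc cs = {} then 0 else Max ((\<lambda>j. lv j cs + j) ` Jc cs))" for cs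
  have main: "dlim (G n X (Suc k) p cs) (real (val cs))" if cs: "cs \<in> tuples (sdom M) m" for cs
  proof -
    define c where "c i = rl cs i" for i
    define T where "T i = tuples (sdom (S i)) k" for i
    define Fb where "Fb i a = card (inst (S i) 1 p (a @ c i))" for i a
    define P where "P j i = inst (S i) k (chi j) (c i)" for j i
    define Nc where "Nc i = card (inst (S i) (Suc k) p (c i))" for i
    have finI: "finite (inst (S i) 1 p d)" for i d
      using finite_subset[OF inst_sub finite_tuples[OF fin]] .
    have Fbpos: "Fb i a > 0 \<longleftrightarrow> (\<exists>x\<in>sdom (S i). sat (S i) (lenv (x # a @ c i)) p)" for i a
      unfolding Fb_def using inst1_ne[of "S i" p "a @ c i"] finI[of i "a @ c i"] by (simp add: card_gt_0_iff)
    have Pmem: "a \<in> P j i \<longleftrightarrow> a \<in> T i \<and> Fb i a > 0 \<and> sat (S i) (lenv (a @ c i)) (th j)"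
      if j: "j \<le> r" for j i a
      unfolding P_def T_def inst_def using chisem[OF j, of "S i" "a @ c i"] Fbpos[of i a] by auto
    have cov0: "{i. \<forall>a\<in>T i. \<exists>j\<le>r. sat (S i) (lenv (a @ c i)) (th j)} \<in> U"
    proof (rule ccontr)
      assume "{i. \<forall>a\<in>T i. \<exists>j\<le>r. sat (S i) (lenv (a @ c i)) (th j)} \<notin> U"
      then have "{i. \<not> (\<forall>a\<in>T i. \<exists>j\<le>r. sat (S i) (lenv (a @ c i)) (th j))} \<in> U" using uf_neg by blast
      then have "{i. \<exists>a\<in>tuples (sdom (S i)) k. \<forall>j\<le>r. \<not> sat (S i) (lenv (a @ c i)) (th j)} \<in> U"
        by (rule uf_imp) (simp add: T_def)
      then obtain a where a: "a \<in> tuples (sdom M) k" "{i. \<forall>j\<le>r. \<not> sat (S i) (lenv (rl a i @ c i)) (th j)} \<in> U"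
        using transfer[of k "\<lambda>i a. \<forall>j\<le>r. \<not> sat (S i) (lenv (a @ c i)) (th j)"] by blast
      have b: "a @ cs \<in> tuples (sdom M) (k + m)" by (rule tuples_append[OF a(1) cs])
      obtain j where j: "j \<le> r" "dlim (G n X 1 p (a @ cs)) (real j)" using HV[OF p1 b] by blast
      have "sat M (lenv (a @ cs)) (th j)" using thsem[OF j(1) b] j(2) by simp
      then have "{i. sat (S i) (lenv (rl (a @ cs) i)) (th j)} \<in> U" using thlos[OF j(1) b] by simp
      then have "{i. sat (S i) (lenv (rl a i @ c i)) (th j)} \<in> U" by (simp add: rl_append c_def)
      then have "{i. sat (S i) (lenv (rl a i @ c i)) (th j) \<and> (\<forall>j\<le>r. \<not> sat (S i) (lenv (rl a i @ c i)) (th j))} \<in> U"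
        using a(2) by (rule uf_conj)
      then obtain i where "sat (S i) (lenv (rl a i @ c i)) (th j)" "\<forall>j\<le>r. \<not> sat (S i) (lenv (rl a i @ c i)) (th j)"
        using uf_ex2 by blast
      then show False using j(1) by blast
    qed
    have cover: "{i. \<forall>a\<in>T i. Fb i a > 0 \<longrightarrow> (\<exists>j\<le>r. a \<in> P j i)} \<in> U"
      using cov0 by (rule uf_imp) (use Pmem in blast)
    have fibB: "{i. \<forall>a\<in>P j i. Fb i a > 0 \<and> \<bar>ln (real (Fb i a)) / LX n X i - real j\<bar> < e} \<in> U"
      if e: "e > 0" and j: "j \<le> r" for e j
    proof (rule ccontr)
      let ?B = "\<lambda>i a. Fb i a > 0 \<and> \<bar>ln (real (Fb i a)) / LX n X i - real j\<bar> < e"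
      assume "{i. \<forall>a\<in>P j i. ?B i a} \<notin> U"
      then have "{i. \<not> (\<forall>a\<in>P j i. ?B i a)} \<in> U" using uf_neg by blast
      then have "{i. \<exists>a\<in>tuples (sdom (S i)) k. a \<in> P j i \<and> \<not> ?B i a} \<in> U"
        by (rule uf_imp) (use Pmem[OF j] in \<open>auto simp: T_def\<close>)
      then obtain a where a: "a \<in> tuples (sdom M) k" "{i. rl a i \<in> P j i \<and> \<not> ?B i (rl a i)} \<in> U"
        using transfer[of k "\<lambda>i a. a \<in> P j i \<and> \<not> ?B i a"] by blast
      have b: "a @ cs \<in> tuples (sdom M) (k + m)" by (rule tuples_append[OF a(1) cs])
      have "{i. sat (S i) (lenv (rl (a @ cs) i)) (th j)} \<in> U"
        using a(2) by (rule uf_imp) (use Pmem[OF j] in \<open>simp add: rl_append c_def\<close>)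
      then have "sat M (lenv (a @ cs)) (th j)" using thlos[OF j b] by simp
      then have "dlim (G n X 1 p (a @ cs)) (real j)" using thsem[OF j b] by simp
      then have "{i. \<bar>G n X 1 p (a @ cs) i - real j\<bar> < e} \<in> U" using e unfolding dlim_def by blast
      then have "{i. \<bar>G n X 1 p (a @ cs) i - real j\<bar> < e \<and> (rl a i \<in> P j i \<and> \<not> ?B i (rl a i))} \<in> U"
        using a(2) by (rule uf_conj)
      then obtain i where i: "\<bar>G n X 1 p (a @ cs) i - real j\<bar> < e" "rl a i \<in> P j i" "\<not> ?B i (rl a i)"
        using uf_ex2 by blast
      have pos: "Fb i (rl a i) > 0" using i(2) Pmem[OF j] by blast
      have "G n X 1 p (a @ cs) i = lg (Fb i (rl a i)) / LX n X i"
        unfolding G_def Fb_def c_def by (simp add: rl_append)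
      also have "\<dots> = ln (real (Fb i (rl a i))) / LX n X i" using lg_pos[OF pos] by simp
      finally show False using i pos by simp
    qed
    have PB: "dlim (\<lambda>i. lg (card (P j i)) / LX n X i) (real (lv j cs))" if j: "j \<le> r" for j
      using lv[OF j cs] unfolding G_def P_def c_def by simp
    have NcE: "Nc i = (\<Sum>a\<in>T i. Fb i a)" for i
      unfolding Nc_def T_def Fb_def by (rule card_inst_Suc[OF fin])
    have core: "dlim (\<lambda>i. lg (Nc i) / LX n X i)
      (if {j. j \<le> r \<and> {i. P j i \<noteq> {}} \<in> U} = {} then 0 else real (Max ((\<lambda>j. lv j cs + j) ` {j. j \<le> r \<and> {i. P j i \<noteq> {}} \<in> U})))"
      by (rule count_core[of "LX n X" T P Nc Fb r "\<lambda>j. lv j cs", OF Linf _ _ NcE cover fibB PB])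
        (simp_all add: T_def finite_tuples fin P_def inst_sub)
    have Jeq: "{j. j \<le> r \<and> {i. P j i \<noteq> {}} \<in> U} = Jc cs"
      unfolding Jc_def P_def c_def using inst_ne[OF chip cs] by blast
    have "G n X (Suc k) p cs = (\<lambda>i. lg (Nc i) / LX n X i)"
      unfolding G_def Nc_def c_def by simp
    then show ?thesis using core unfolding Jeq val_def by (cases "Jc cs = {}") simp_all
  qed
  have valb: "val cs \<le> Suc k * r" if cs: "cs \<in> tuples (sdom M) m" for cs
  proof (cases "Jc cs = {}")
    case True then show ?thesis by (simp add: val_def)
  next
    case False
    have fin: "finite (Jc cs)" unfolding Jc_def by simp
    have "\<forall>w\<in>(\<lambda>j. lv j cs + j) ` Jc cs. w \<le> Suc k * r"
    proof
      fix w assume "w \<in> (\<lambda>j. lv j cs + j) ` Jc cs"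
      then obtain j where j: "j \<in> Jc cs" "w = lv j cs + j" by blast
      then have "j \<le> r" unfolding Jc_def by simp
      then have "lv j cs \<le> k * r" using lv cs by blast
      then show "w \<le> Suc k * r" using j \<open>j \<le> r\<close> by simp
    qed
    then show ?thesis using False fin by (simp add: val_def)
  qed
  have part1: "\<forall>cs\<in>tuples (sdom M) m. \<exists>l\<le>Suc k * r. dlim (G n X (Suc k) p cs) (real l)"
    using main valb by blast
  have part2: "definable0 fa ra M m {cs \<in> tuples (sdom M) m. dlim (G n X (Suc k) p cs) (real l)}" for l
  proof -
    have eq1: "{cs \<in> tuples (sdom M) m. dlim (G n X (Suc k) p cs) (real l)} = {cs \<in> tuples (sdom M) m. val cs = l}"
      by (rule value_set) (rule main)
    define NE where "NE j = {cs \<in> tuples (sdom M) m. inst M k (chi j) cs \<noteq> {}}" for j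
    define E where "E j l' = {cs \<in> tuples (sdom M) m. dlim (G n X k (chi j) cs) (real l')}" for j l'
    have NEd: "definable0 fa ra M m (NE j)" if j: "j \<le> r" for j
    proof -
      have fc: "fvf (chi j) \<subseteq> {..<k + m}" using chip[OF j] by (simp add: pformula_def)
      note ex = exk_props[OF fc, of fa ra M]
      have "pformula fa ra m 0 (exk k m (chi j))" using ex chip[OF j] by (simp add: pformula_def)
      then have "definable0 fa ra M m {cs \<in> tuples (sdom M) m. sat M (lenv cs) (exk k m (chi j))}"
        by (rule def_formula)
      moreover have "{cs \<in> tuples (sdom M) m. sat M (lenv cs) (exk k m (chi j))} = NE j"
        unfolding NE_def inst_def using ex by blast
      ultimately show ?thesis by simp
    qed
    have mem: "cs \<in> NE j \<inter> E j l' \<longleftrightarrow> j \<in> Jc cs \<and> lv j cs = l'"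
      if cs: "cs \<in> tuples (sdom M) m" and j: "j \<le> r" for cs j l'
    proof -
      have "dlim (G n X k (chi j) cs) (real l') \<longleftrightarrow> lv j cs = l'"
        using lv[OF j cs] dlim_unique[of "G n X k (chi j) cs" "real (lv j cs)" "real l'"] by auto
      then show ?thesis using cs j unfolding NE_def E_def Jc_def by auto
    qed
    define I1 where "I1 = {x \<in> {..r} \<times> {..k * r}. snd x + fst x > l}"
    define I2 where "I2 = {x \<in> {..r} \<times> {..k * r}. snd x + fst x = l}"
    define Bad where "Bad = (\<Union>x\<in>I1. NE (fst x) \<inter> E (fst x) (snd x))"
    define Good where "Good = (if l = 0 then tuples (sdom M) m else (\<Union>x\<in>I2. NE (fst x) \<inter> E (fst x) (snd x)))"
    have bad_iff: "cs \<in> Bad \<longleftrightarrow> (\<exists>j\<in>Jc cs. lv j cs + j > l)" if cs: "cs \<in> tuples (sdom M) m" for cs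
    proof
      assume "cs \<in> Bad"
      then obtain x where x: "x \<in> I1" "cs \<in> NE (fst x) \<inter> E (fst x) (snd x)" unfolding Bad_def by blast
      then have "fst x \<le> r" unfolding I1_def by auto
      then have "fst x \<in> Jc cs \<and> lv (fst x) cs = snd x" using mem[OF cs] x(2) by blast
      then show "\<exists>j\<in>Jc cs. lv j cs + j > l" using x(1) unfolding I1_def by auto
    next
      assume "\<exists>j\<in>Jc cs. lv j cs + j > l"
      then obtain j where j: "j \<in> Jc cs" "lv j cs + j > l" by blast
      then have jr: "j \<le> r" unfolding Jc_def by simp
      then have "(j, lv j cs) \<in> I1" using j lv[OF jr cs] unfolding I1_def by auto
      moreover have "cs \<in> NE j \<inter> E j (lv j cs)" using mem[OF cs jr] j by blast
      ultimately show "cs \<in> Bad" unfolding Bad_def by force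
    qed
    have good_iff: "cs \<in> Good \<longleftrightarrow> (l = 0 \<or> (\<exists>j\<in>Jc cs. lv j cs + j = l))" if cs: "cs \<in> tuples (sdom M) m" for cs
    proof (cases "l = 0")
      case True then show ?thesis using cs unfolding Good_def by simp
    next
      case False
      show ?thesis
      proof
        assume "cs \<in> Good"
        then obtain x where x: "x \<in> I2" "cs \<in> NE (fst x) \<inter> E (fst x) (snd x)" unfolding Good_def using False by auto
        then have "fst x \<le> r" unfolding I2_def by auto
        then have "fst x \<in> Jc cs \<and> lv (fst x) cs = snd x" using mem[OF cs] x(2) by blast
        then show "l = 0 \<or> (\<exists>j\<in>Jc cs. lv j cs + j = l)" using x(1) unfolding I2_def by auto
      next
        assume "l = 0 \<or> (\<exists>j\<in>Jc cs. lv j cs + j = l)"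
        then obtain j where j: "j \<in> Jc cs" "lv j cs + j = l" using False by blast
        then have jr: "j \<le> r" unfolding Jc_def by simp
        then have "(j, lv j cs) \<in> I2" using j lv[OF jr cs] unfolding I2_def by auto
        moreover have "cs \<in> NE j \<inter> E j (lv j cs)" using mem[OF cs jr] j by blast
        ultimately show "cs \<in> Good" unfolding Good_def using False by force
      qed
    qed
    have subG: "Good \<subseteq> tuples (sdom M) m" unfolding Good_def NE_def by auto
    have eq2: "{cs \<in> tuples (sdom M) m. val cs = l} = (tuples (sdom M) m - Bad) \<inter> Good"
    proof (rule set_eqI)
      fix cs
      show "cs \<in> {cs \<in> tuples (sdom M) m. val cs = l} \<longleftrightarrow> cs \<in> (tuples (sdom M) m - Bad) \<inter> Good"
      proof (cases "cs \<in> tuples (sdom M) m")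
        case True
        have fin: "finite (Jc cs)" unfolding Jc_def by simp
        have "val cs = l \<longleftrightarrow> (\<forall>j\<in>Jc cs. lv j cs + j \<le> l) \<and> (l = 0 \<or> (\<exists>j\<in>Jc cs. lv j cs + j = l))"
          unfolding val_def by (rule max_val[OF fin])
        then show ?thesis using True bad_iff[OF True] good_iff[OF True] by (auto simp: not_less)
      next
        case False then show ?thesis by blast
      qed
    qed
    have finI: "finite I1" "finite I2" unfolding I1_def I2_def by auto
    have dBad: "definable0 fa ra M m Bad" unfolding Bad_def
    proof (rule def_UN[OF finI(1)])
      fix x assume "x \<in> I1"
      then have "fst x \<le> r" unfolding I1_def by auto
      then show "definable0 fa ra M m (NE (fst x) \<inter> E (fst x) (snd x))"
        using def_Int NEd IHd unfolding E_def by blast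
    qed
    have dGood: "definable0 fa ra M m Good"
    proof (cases "l = 0")
      case True then show ?thesis unfolding Good_def using def_all by simp
    next
      case False
      have "definable0 fa ra M m (\<Union>x\<in>I2. NE (fst x) \<inter> E (fst x) (snd x))"
      proof (rule def_UN[OF finI(2)])
        fix x assume "x \<in> I2"
        then have "fst x \<le> r" unfolding I2_def by auto
        then show "definable0 fa ra M m (NE (fst x) \<inter> E (fst x) (snd x))"
          using def_Int NEd IHd unfolding E_def by blast
      qed
      then show ?thesis unfolding Good_def using False by simp
    qed
    show ?thesis unfolding eq1 eq2 by (rule def_Int[OF def_diff[OF dBad] dGood])
  qed
  show "(\<forall>cs\<in>tuples (sdom M) m. \<exists>l\<le>Suc k * r. dlim (G n X (Suc k) p cs) (real l)) \<and>
     (\<forall>l. definable0 fa ra M m {cs \<in> tuples (sdom M) m. dlim (G n X (Suc k) p cs) (real l)})"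
    using part1 part2 by blast
qed

end


context UP begin

lemma claim_triv:
  assumes z: "{i. LX n X i = 0} \<in> U"
  shows "claim n X r k"
  unfolding claim_def
proof (intro allI impI)
  fix p m assume p: "pformula fa ra k m p"
  have zz: "dlim (G n X k p cs) 0" for cs
    by (rule dlim_const, rule uf_imp[OF z]) (simp add: G_def)
  have A: "\<forall>cs\<in>tuples (sdom M) m. \<exists>l\<le>k * r. dlim (G n X k p cs) (real l)" using zz by force
  have B: "\<forall>l. definable0 fa ra M m {cs \<in> tuples (sdom M) m. dlim (G n X k p cs) (real l)}"
  proof
    fix l
    have veq: "{cs \<in> tuples (sdom M) m. dlim (G n X k p cs) (real l)} = {cs \<in> tuples (sdom M) m. (0::nat) = l}"
      by (rule value_set) (use zz in simp)
    show "definable0 fa ra M m {cs \<in> tuples (sdom M) m. dlim (G n X k p cs) (real l)}"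
    proof (cases "l = 0")
      case True then show ?thesis using def_all veq by simp
    next
      case False
      then have e0: "{cs \<in> tuples (sdom M) m. dlim (G n X k p cs) (real l)} = {}" using veq by simp
      show ?thesis unfolding e0 by (rule def_empty)
    qed
  qed
  show "(\<forall>cs\<in>tuples (sdom M) m. \<exists>l\<le>k * r. dlim (G n X k p cs) (real l)) \<and>
     (\<forall>l. definable0 fa ra M m {cs \<in> tuples (sdom M) m. dlim (G n X k p cs) (real l)})" using A B by blast
qed

lemma card_unbounded:
  assumes infM: "infinite (sdom M)"
  shows "{i. card (sdom (S i)) > B} \<in> U"
proof (rule ccontr)
  assume "{i. card (sdom (S i)) > B} \<notin> U"
  then have le: "{i. \<not> card (sdom (S i)) > B} \<in> U" using uf_neg by blast
  obtain F where F: "F \<subseteq> sdom M" "finite F" "card F = Suc B"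
    using infinite_arbitrarily_large[OF infM] by blast
  have W: "{i. \<forall>x\<in>F \<times> F. fst x \<noteq> snd x \<longrightarrow> urep (fst x) i \<noteq> urep (snd x) i} \<in> U"
  proof (rule uf_finite_Inter)
    show "finite (F \<times> F)" using F by simp
    fix x assume x: "x \<in> F \<times> F"
    show "{i. fst x \<noteq> snd x \<longrightarrow> urep (fst x) i \<noteq> urep (snd x) i} \<in> U"
    proof (cases "fst x = snd x")
      case True then show ?thesis using uf_UNIV by simp
    next
      case False
      have c1: "fst x \<in> sdom M" "snd x \<in> sdom M" using x F by auto
      have "{i. urep (fst x) i = urep (snd x) i} \<notin> U"
        using ucls_eq[OF urep_in(1)[OF c1(1)] urep_in(1)[OF c1(2)]] urep_in(2)[OF c1(1)] urep_in(2)[OF c1(2)] False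
        by metis
      then have "{i. urep (fst x) i \<noteq> urep (snd x) i} \<in> U" using uf_neg[of "\<lambda>i. urep (fst x) i = urep (snd x) i"] by simp
      then show ?thesis by (rule uf_imp) simp
    qed
  qed
  have "{i. (\<forall>x\<in>F \<times> F. fst x \<noteq> snd x \<longrightarrow> urep (fst x) i \<noteq> urep (snd x) i) \<and> \<not> card (sdom (S i)) > B} \<in> U"
    using W le by (rule uf_conj)
  then obtain i where i: "\<forall>x\<in>F \<times> F. fst x \<noteq> snd x \<longrightarrow> urep (fst x) i \<noteq> urep (snd x) i" "\<not> card (sdom (S i)) > B"
    using uf_ex2 by blast
  have inj: "inj_on (\<lambda>c. urep c i) F"
  proof (rule inj_onI)
    fix a b assume "a \<in> F" "b \<in> F" "urep a i = urep b i"
    then show "a = b" using i(1) by force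
  qed
  have "(\<lambda>c. urep c i) ` F \<subseteq> sdom (S i)" using F(1) urep_dom by blast
  then have "card ((\<lambda>c. urep c i) ` F) \<le> card (sdom (S i))" using fin by (rule card_mono[rotated])
  then have "card F \<le> card (sdom (S i))" using card_image[OF inj] by simp
  then show False using F(3) i(2) by simp
qed

lemma lg_nonneg: "lg k \<ge> 0" by (simp add: lg_def)

lemma Linf:
  assumes infM: "infinite (sdom M)"
    and nz: "{i. LX n X i = 0} \<notin> U"
    and j0: "dlim (G n X 1 (Eq (Var 0) (Var 0)) []) (real j0)"
  shows "{i. LX n X i > K} \<in> U"
proof (rule ccontr)
  define K' where "K' = max K 1"
  assume "{i. LX n X i > K} \<notin> U"
  then have n1: "{i. \<not> LX n X i > K} \<in> U" using uf_neg by blast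
  have s1: "{i. LX n X i \<le> K'} \<in> U" using n1 by (rule uf_imp) (simp add: K'_def)
  have s2: "{i. LX n X i \<noteq> 0} \<in> U" using nz uf_neg by blast
  have s3: "{i. \<bar>G n X 1 (Eq (Var 0) (Var 0)) [] i - real j0\<bar> < 1} \<in> U" using j0 unfolding dlim_def by simp
  define B where "B = nat \<lceil>exp (K' * (real j0 + 1))\<rceil>"
  have s4: "{i. card (sdom (S i)) > B} \<in> U" by (rule card_unbounded[OF infM])
  have "{i. LX n X i \<le> K' \<and> LX n X i \<noteq> 0 \<and> \<bar>G n X 1 (Eq (Var 0) (Var 0)) [] i - real j0\<bar> < 1 \<and> card (sdom (S i)) > B} \<in> U"
    using uf_conj[OF s1 uf_conj[OF s2 uf_conj[OF s3 s4]]] .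
  then obtain i where i: "LX n X i \<le> K'" "LX n X i \<noteq> 0" "\<bar>G n X 1 (Eq (Var 0) (Var 0)) [] i - real j0\<bar> < 1"
      "card (sdom (S i)) > B"
    using uf_ex2 by blast
  define L where "L = LX n X i"
  have L: "L > 0" "L \<le> K'" using i(1,2) lg_nonneg unfolding L_def LX_def by (auto simp: order_le_less)
  have K': "K' \<ge> 1" by (simp add: K'_def)
  have inst_eq: "inst (S i) 1 (Eq (Var 0) (Var 0)) (rl [] i) = tuples (sdom (S i)) 1"
    by (auto simp: inst_def)
  have "tuples (sdom (S i)) 1 = (\<lambda>x. [x]) ` sdom (S i)"
    using tuples_Suc[of "sdom (S i)" 0] by (auto simp: tuples_0)
  then have ct: "card (tuples (sdom (S i)) 1) = card (sdom (S i))"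
    by (simp add: card_image inj_on_def)
  define N where "N = card (sdom (S i))"
  have Npos: "N > 0" using i(4) unfolding N_def by simp
  have G: "G n X 1 (Eq (Var 0) (Var 0)) [] i = ln (real N) / L"
    unfolding G_def inst_eq ct L_def N_def[symmetric] using lg_pos[OF Npos] by simp
  have "exp (K' * (real j0 + 1)) \<le> real B" unfolding B_def by linarith
  also have "\<dots> < real N" using i(4) unfolding N_def by simp
  finally have "K' * (real j0 + 1) < ln (real N)" using Npos by (metis exp_less_cancel_iff exp_ln of_nat_0_less_iff)
  moreover have "L * (real j0 + 1) \<le> K' * (real j0 + 1)" using L by (intro mult_right_mono) auto
  ultimately have "L * (real j0 + 1) < ln (real N)" by linarith
  then have "real j0 + 1 < ln (real N) / L" using L by (simp add: field_simps)
  then show False using i(3) G by linarith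
qed

end

theorem corollary2p12:
  fixes fa :: "'f \<Rightarrow> nat" and ra :: "'r \<Rightarrow> nat"
    and S :: "'i \<Rightarrow> ('f, 'r, 'a) struc" and U :: "'i set set"
    and n :: nat and X :: "('i \<Rightarrow> 'a) set list set" and r :: nat
  assumes strucs: "\<And>i. is_struc fa (S i)"
    and fin: "\<And>i. finite (sdom (S i))"
    and ultra: "ultrafilter U"
    and infM: "infinite (sdom (uprod S U))"
    and intX: "internal S U n X"
    and vals: "\<And>phi m b. pformula fa ra 1 m phi \<Longrightarrow> b \<in> tuples (sdom (uprod S U)) m \<Longrightarrow>
         udelta S U n X 1 (inst (uprod S U) 1 phi b) \<in> {ereal (real j) | j. j \<le> r}"
    and defs: "\<And>phi m j. pformula fa ra 1 m phi \<Longrightarrow> j \<le> r \<Longrightarrow>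
         definable0 fa ra (uprod S U) m
           {b \<in> tuples (sdom (uprod S U)) m.
              udelta S U n X 1 (inst (uprod S U) 1 phi b) = ereal (real j)}"
  shows "(\<forall>psi k m c. pformula fa ra k m psi \<longrightarrow> c \<in> tuples (sdom (uprod S U)) m \<longrightarrow>
            udelta S U n X k (inst (uprod S U) k psi c) \<in> {ereal (real j) | j. j \<le> k * r})
         \<and> delta_definable fa ra S U n X"
proof -
  interpret UP U fa ra S by unfold_locales (use ultra strucs fin in auto)
  have HV: "\<exists>j\<le>r. dlim (G n X 1 phi b) (real j)"
    if p: "pformula fa ra 1 m phi" and b: "b \<in> tuples (sdom (uprod S U)) m" for phi m b
  proof -
    obtain j where "j \<le> r" "udelta S U n X 1 (inst (uprod S U) 1 phi b) = ereal (real j)"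
      using vals[OF p b] by blast
    then show ?thesis using udelta_dlim[OF p b] by blast
  qed
  have HD: "definable0 fa ra (uprod S U) m {b \<in> tuples (sdom (uprod S U)) m. dlim (G n X 1 phi b) (real j)}"
    if p: "pformula fa ra 1 m phi" and j: "j \<le> r" for phi m j
  proof -
    have "{b \<in> tuples (sdom (uprod S U)) m. udelta S U n X 1 (inst (uprod S U) 1 phi b) = ereal (real j)}
       = {b \<in> tuples (sdom (uprod S U)) m. dlim (G n X 1 phi b) (real j)}"
      using udelta_dlim[OF p] by blast
    then show ?thesis using defs[OF p j] by simp
  qed
  have claims: "claim n X r k" for k
  proof (cases "{i. LX n X i = 0} \<in> U")
    case True then show ?thesis by (rule claim_triv)
  next
    case False
    have p0: "pformula fa ra 1 0 (Eq (Var 0) (Var 0))" by (simp add: pformula_def)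
    have b0: "[] \<in> tuples (sdom (uprod S U)) 0" by (simp add: tuples_def)
    obtain j0 where "j0 \<le> r" "dlim (G n X 1 (Eq (Var 0) (Var 0)) []) (real j0)" using HV[OF p0 b0] by blast
    then have Li: "{i. LX n X i > K} \<in> U" for K using Linf[OF infM False] by blast
    show ?thesis
    proof (induction k)
      case 0 then show ?case by (rule claim_0)
    next
      case (Suc k) show ?case using claim_Suc[OF Li HV HD Suc.IH] .
    qed
  qed
  have val: "\<exists>l\<le>k * r. udelta S U n X k (inst (uprod S U) k psi c) = ereal (real l)"
    if p: "pformula fa ra k m psi" and c: "c \<in> tuples (sdom (uprod S U)) m" for psi k m c
  proof -
    obtain l where "l \<le> k * r" "dlim (G n X k psi c) (real l)" using claims[of k] p c unfolding claim_def by blast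
    then show ?thesis using udelta_dlim[OF p c] by blast
  qed
  have part1: "\<forall>psi k m c. pformula fa ra k m psi \<longrightarrow> c \<in> tuples (sdom (uprod S U)) m \<longrightarrow>
            udelta S U n X k (inst (uprod S U) k psi c) \<in> {ereal (real j) | j. j \<le> k * r}"
    using val by blast
  have cont: "delta_continuous fa ra S U n X"
    unfolding delta_continuous_def
  proof (intro allI impI)
    fix phi k m and r1 r2 :: real
    assume p: "pformula fa ra k m phi" and r12: "r1 < r2"
    define D where "D = (\<Union>l\<in>{l. l \<le> k * r \<and> real l \<le> r1}.
        {cs \<in> tuples (sdom (uprod S U)) m. dlim (G n X k phi cs) (real l)})"
    have "definable0 fa ra (uprod S U) m D" unfolding D_def
      by (rule def_UN) (use claims[of k] p in \<open>auto simp: claim_def\<close>)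
    moreover have "{a \<in> tuples (sdom (uprod S U)) m. udelta S U n X k (inst (uprod S U) k phi a) \<le> ereal r1} \<subseteq> D"
    proof
      fix a assume a: "a \<in> {a \<in> tuples (sdom (uprod S U)) m. udelta S U n X k (inst (uprod S U) k phi a) \<le> ereal r1}"
      then have at: "a \<in> tuples (sdom (uprod S U)) m" by simp
      obtain l where l: "l \<le> k * r" "udelta S U n X k (inst (uprod S U) k phi a) = ereal (real l)"
        using val[OF p at] by blast
      then have "real l \<le> r1" using a by simp
      moreover have "dlim (G n X k phi a) (real l)" using l udelta_dlim[OF p at] by simp
      ultimately show "a \<in> D" unfolding D_def using l(1) at by blast
    qed
    moreover have "D \<subseteq> {a \<in> tuples (sdom (uprod S U)) m. udelta S U n X k (inst (uprod S U) k phi a) < ereal r2}"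
    proof
      fix a assume "a \<in> D"
      then obtain l where l: "real l \<le> r1" "a \<in> tuples (sdom (uprod S U)) m" "dlim (G n X k phi a) (real l)"
        unfolding D_def by blast
      then have "udelta S U n X k (inst (uprod S U) k phi a) = ereal (real l)" using udelta_dlim[OF p l(2)] by simp
      then show "a \<in> {a \<in> tuples (sdom (uprod S U)) m. udelta S U n X k (inst (uprod S U) k phi a) < ereal r2}"
        using l r12 by simp
    qed
    ultimately show "\<exists>D. definable0 fa ra (uprod S U) m D \<and>
          {a \<in> tuples (sdom (uprod S U)) m. udelta S U n X k (inst (uprod S U) k phi a) \<le> ereal r1} \<subseteq> D \<and>
          D \<subseteq> {a \<in> tuples (sdom (uprod S U)) m. udelta S U n X k (inst (uprod S U) k phi a) < ereal r2}"
      by blast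
  qed
  have finv: "finite ((\<lambda>a. udelta S U n X k (inst (uprod S U) k phi a)) ` tuples (sdom (uprod S U)) m)"
    if p: "pformula fa ra k m phi" for phi k m
  proof (rule finite_subset)
    show "(\<lambda>a. udelta S U n X k (inst (uprod S U) k phi a)) ` tuples (sdom (uprod S U)) m
        \<subseteq> (\<lambda>l. ereal (real l)) ` {..k * r}"
      using val[OF p] by fastforce
  qed simp
  have "delta_definable fa ra S U n X"
    unfolding delta_definable_def using cont finv by blast
  then show ?thesis using part1 by blast
qed



end
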